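(* Let $n \geq 2$ be an integer and let $L$ be a totally real Galois extension of $\mathbb{Q}$ with $\operatorname{Gal}(L/\mathbb{Q}) \cong (\mathbb{Z}/2\mathbb{Z})^n$. Then for every nonzero $w \in \bigwedge^2 \operatorname{LOG}(\mathcal{O}_L^* )$, \[ \|w\|_1 \geq 2 \log\left(\frac{1+\sqrt{5}}{2}\right)\log(1+\sqrt{2}) \approx 0.8483 . \]
   Context: For a number field $L$, let $\mathcal{A}_L$ be its set of Archimedean places and $\mathcal{O}_L^*$ its unit group. Define $\operatorname{LOG}:\mathcal{O}_L^* \to \mathbb{R}^{\mathcal{A}_L}$ by $(\operatorname{LOG}(\gamma))_v = e_v \log|\gamma|_v$, where $e_v=1$ if $v$ is real and $e_v=2$ if $v$ is complex, and $|\cdot|_v$ is the absolute value associated to $v$ extending the usual absolute value on $\mathbb{Q}$. Let $\{\delta^v\}_{v\in\mathcal{A}_L}$ be the standard orthonormal basis of $\mathbb{R}^{\mathcal{A}_L}$; for each $2$-element subset $I=\{v_1,v_2\}$ of $\mathcal{A}_L$ (with a fixed ordering) put $\delta^I=\delta^{v_1}\wedge\delta^{v_2}$, giving a basis of $\bigwedge^2\mathbb{R}^{\mathcal{A}_L}$. For $w=\sum_I c_I\delta^I$, define $\|w\|_1=\sum_I |c_I|$. $\bigwedge^2\operatorname{LOG}(\mathcal{O}_L^* )$ denotes the subgroup of $\bigwedge^2\mathbb{R}^{\mathcal{A}_L}$ generated by all $\operatorname{LOG}(\epsilon_1)\wedge\operatorname{LOG}(\epsilon_2)$ with $\epsilon_1,\epsilon_2\in\mathcal{O}_L^*$.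 *)

theory Defs
  imports "HOL-Analysis.Analysis" "HOL-Computational_Algebra.Polynomial"
    "HOL-Algebra.Elementary_Groups" "HOL-Algebra.Product_Groups"
begin

text \<open>Number fields are modelled as subfields of the complex numbers that are
finite-dimensional over the rationals.\<close>

definition subfield_C :: "complex set \<Rightarrow> bool" where
  "subfield_C L \<longleftrightarrow> 0 \<in> L \<and> 1 \<in> L \<and>
     (\<forall>x\<in>L. \<forall>y\<in>L. x + y \<in> L \<and> x - y \<in> L \<and> x * y \<in> L) \<and>
     (\<forall>x\<in>L. x \<noteq> 0 \<longrightarrow> inverse x \<in> L)"

definition number_field :: "complex set \<Rightarrow> bool" where
  "number_field L \<longleftrightarrow> subfield_C L \<and>
     (\<exists>B. finite B \<and> B \<subseteq> L \<and>
        (\<forall>x\<in>L. \<exists>c::complex \<Rightarrow> rat. x = (\<Sum>b\<in>B. of_rat (c b) * b)))"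

definition embeddings :: "complex set \<Rightarrow> (complex \<Rightarrow> complex) set" where
  "embeddings L = {\<sigma>. \<sigma> \<in> extensional L \<and> \<sigma> 1 = 1 \<and>
     (\<forall>x\<in>L. \<forall>y\<in>L. \<sigma> (x + y) = \<sigma> x + \<sigma> y \<and> \<sigma> (x * y) = \<sigma> x * \<sigma> y)}"

definition totally_real :: "complex set \<Rightarrow> bool" where
  "totally_real L \<longleftrightarrow> (\<forall>\<sigma>\<in>embeddings L. \<sigma> ` L \<subseteq> \<real>)"

text \<open>Galois over Q (characteristic 0): normal, i.e. every embedding maps L onto L.\<close>
definition galois_over_Q :: "complex set \<Rightarrow> bool" where
  "galois_over_Q L \<longleftrightarrow> (\<forall>\<sigma>\<in>embeddings L. \<sigma> ` L = L)"

definition Gal :: "complex set \<Rightarrow> (complex \<Rightarrow> complex) monoid" where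
  "Gal L = \<lparr>carrier = {\<sigma>\<in>embeddings L. \<sigma> ` L = L},
            monoid.mult = (\<lambda>\<sigma> \<tau>. compose L \<sigma> \<tau>),
            one = restrict id L\<rparr>"

definition Z2_power :: "nat \<Rightarrow> (nat \<Rightarrow> int) monoid" where
  "Z2_power n = product_group {..<n} (\<lambda>_. integer_mod_group 2)"

text \<open>Archimedean places: the absolute values x \<mapsto> |\<sigma> x| on L induced by the
embeddings (two embeddings give the same place iff they are complex conjugate).\<close>
definition place_of :: "complex set \<Rightarrow> (complex \<Rightarrow> complex) \<Rightarrow> (complex \<Rightarrow> real)" where
  "place_of L \<sigma> = (\<lambda>x\<in>L. cmod (\<sigma> x))"

definition arch_places :: "complex set \<Rightarrow> (complex \<Rightarrow> real) set" where
  "arch_places L = place_of L ` embeddings L"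

definition real_place :: "complex set \<Rightarrow> (complex \<Rightarrow> real) \<Rightarrow> bool" where
  "real_place L v \<longleftrightarrow> (\<exists>\<sigma>\<in>embeddings L. v = place_of L \<sigma> \<and> \<sigma> ` L \<subseteq> \<real>)"

definition e_place :: "complex set \<Rightarrow> (complex \<Rightarrow> real) \<Rightarrow> real" where
  "e_place L v = (if real_place L v then 1 else 2)"

definition units :: "complex set \<Rightarrow> complex set" where
  "units L = {\<gamma>\<in>L. \<gamma> \<noteq> 0 \<and> algebraic_int \<gamma> \<and> algebraic_int (inverse \<gamma>)}"

definition LOG :: "complex set \<Rightarrow> complex \<Rightarrow> ((complex \<Rightarrow> real) \<Rightarrow> real)" where
  "LOG L \<gamma> = (\<lambda>v. if v \<in> arch_places L then e_place L v * ln (v \<gamma>) else 0)"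

text \<open>Elements of the second exterior power of R^A are represented by their
antisymmetric coefficient functions on ordered pairs of places:
  w = \<Sum>_{v1<v2} w(v1,v2) \<delta>^{v1}\<wedge>\<delta>^{v2} for any ordering; zero outside A\<times>A.\<close>
definition wedge2 :: "complex set \<Rightarrow> ((complex \<Rightarrow> real) \<Rightarrow> real) \<Rightarrow> ((complex \<Rightarrow> real) \<Rightarrow> real)
      \<Rightarrow> ((complex \<Rightarrow> real) \<times> (complex \<Rightarrow> real) \<Rightarrow> real)" where
  "wedge2 L a b = (\<lambda>(v1, v2). if v1 \<in> arch_places L \<and> v2 \<in> arch_places L
                               then a v1 * b v2 - a v2 * b v1 else 0)"

inductive_set wedge2_LOG_units ::
    "complex set \<Rightarrow> ((complex \<Rightarrow> real) \<times> (complex \<Rightarrow> real) \<Rightarrow> real) set" for L where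
  zero: "(\<lambda>_. 0) \<in> wedge2_LOG_units L"
| gen: "\<epsilon>1 \<in> units L \<Longrightarrow> \<epsilon>2 \<in> units L \<Longrightarrow> wedge2 L (LOG L \<epsilon>1) (LOG L \<epsilon>2) \<in> wedge2_LOG_units L"
| diff: "x \<in> wedge2_LOG_units L \<Longrightarrow> y \<in> wedge2_LOG_units L \<Longrightarrow> (\<lambda>p. x p - y p) \<in> wedge2_LOG_units L"

text \<open>The l1 norm \<Sum>_I |c_I| over 2-element subsets I = {v1,v2}: each unordered pair
appears twice among ordered pairs (with coefficients of opposite sign), hence 1/2.\<close>
definition norm1_wedge2 :: "complex set \<Rightarrow> ((complex \<Rightarrow> real) \<times> (complex \<Rightarrow> real) \<Rightarrow> real) \<Rightarrow> real" where
  "norm1_wedge2 L w = (1/2) * (\<Sum>p\<in>{(v1, v2). v1 \<in> arch_places L \<and> v2 \<in> arch_places L \<and> v1 \<noteq> v2}. \<bar>w p\<bar>)"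

end

theory Submission
  imports Defs "Jordan_Normal_Form.Char_Poly"
begin

lemma alg_int_eig_nat:
  fixes x :: complex and v :: "nat \<Rightarrow> complex" and a :: "nat \<Rightarrow> nat \<Rightarrow> int"
  assumes "i0 < k" "v i0 \<noteq> 0" "\<forall>i<k. x * v i = (\<Sum>j<k. of_int (a i j) * v j)"
  shows "algebraic_int x"
proof -
  define A :: "int mat" where "A = mat k k (\<lambda>(i,j). a i j)"
  define Ac :: "complex mat" where "Ac = map_mat of_int A"
  define vv where "vv = vec k v"
  have A: "A \<in> carrier_mat k k" unfolding A_def by simp
  have Ac: "Ac \<in> carrier_mat k k" unfolding Ac_def A_def by simp
  have "Ac *\<^sub>v vv = x \<cdot>\<^sub>v vv"
  proof (rule eq_vecI)
    fix i assume "i < dim_vec (x \<cdot>\<^sub>v vv)"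
    then have i: "i < k" by (simp add: vv_def)
    have "(Ac *\<^sub>v vv) $ i = (\<Sum>j<k. of_int (a i j) * v j)"
      using i unfolding Ac_def A_def vv_def
      by (simp add: mult_mat_vec_def scalar_prod_def row_def atLeast0LessThan)
    also have "\<dots> = x * v i" using assms(3) i by simp
    finally show "(Ac *\<^sub>v vv) $ i = (x \<cdot>\<^sub>v vv) $ i" using i by (simp add: vv_def)
  qed (simp add: Ac_def A_def vv_def)
  moreover have "vv \<noteq> 0\<^sub>v k"
  proof
    assume "vv = 0\<^sub>v k"
    then have "vv $ i0 = 0" using assms(1) by simp
    then show False using assms(1,2) by (simp add: vv_def)
  qed
  ultimately have "eigenvector Ac vv x" unfolding eigenvector_def using Ac
    by (simp add: vv_def)
  then have "eigenvalue Ac x" unfolding eigenvalue_def by blast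
  then have r: "poly (char_poly Ac) x = 0" using eigenvalue_root_char_poly[OF Ac] by simp
  have cp: "char_poly Ac = of_int_poly (char_poly A)"
    unfolding Ac_def using of_int_hom.char_poly_hom[OF A] by simp
  have dm: "degree (char_poly A) = k \<and> coeff (char_poly A) k = 1"
    using degree_monic_char_poly[OF A] .
  show ?thesis
  proof (rule algebraic_int.intros[of "char_poly Ac"])
    show "lead_coeff (char_poly Ac) = 1" using dm unfolding cp by (simp add: degree_map_poly)
    show "\<forall>i. coeff (char_poly Ac) i \<in> \<int>" unfolding cp by (simp add: coeff_map_poly)
    show "poly (char_poly Ac) x = 0" by (rule r)
  qed
qed

lemma alg_int_eig:
  fixes x :: complex and v :: "'i \<Rightarrow> complex" and a :: "'i \<Rightarrow> 'i \<Rightarrow> int"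
  assumes "finite I" "i0 \<in> I" "v i0 \<noteq> 0" "\<forall>i\<in>I. x * v i = (\<Sum>j\<in>I. of_int (a i j) * v j)"
  shows "algebraic_int x"
proof -
  obtain e where e: "bij_betw e {..<card I} I"
    using assms(1) ex_bij_betw_nat_finite lessThan_atLeast0 by metis
  obtain k0 where k0: "k0 < card I" "e k0 = i0"
    using e assms(2) by (metis bij_betw_iff_bijections lessThan_iff)
  show ?thesis
  proof (rule alg_int_eig_nat[of k0 "card I" "v \<circ> e" x "\<lambda>i j. a (e i) (e j)"])
    show "k0 < card I" "(v \<circ> e) k0 \<noteq> 0" using k0 assms(3) by auto
    show "\<forall>i<card I. x * (v \<circ> e) i = (\<Sum>j<card I. of_int (a (e i) (e j)) * (v \<circ> e) j)"
    proof (intro allI impI)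
      fix i assume i: "i < card I"
      then have "e i \<in> I" using e by (auto simp: bij_betw_def)
      then have "x * v (e i) = (\<Sum>j\<in>I. of_int (a (e i) j) * v j)" using assms(4) by blast
      also have "\<dots> = (\<Sum>j<card I. of_int (a (e i) (e j)) * v (e j))"
        using sum.reindex_bij_betw[OF e, of "\<lambda>j. of_int (a (e i) j) * v j"] by simp
      finally show "x * (v \<circ> e) i = (\<Sum>j<card I. of_int (a (e i) (e j)) * (v \<circ> e) j)" by simp
    qed
  qed
qed

definition zspan :: "'i set \<Rightarrow> ('i \<Rightarrow> complex) \<Rightarrow> complex set" where
  "zspan I v = {y. \<exists>c. y = (\<Sum>j\<in>I. of_int (c j) * v j)}"

lemma zspan_alg_int:
  assumes "finite I" "i0 \<in> I" "v i0 \<noteq> 0" "\<forall>i\<in>I. x * v i \<in> zspan I v"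
  shows "algebraic_int x"
proof -
  from assms(4) have "\<forall>i\<in>I. \<exists>c. x * v i = (\<Sum>j\<in>I. of_int (c j) * v j)"
    unfolding zspan_def by blast
  then obtain a where "\<forall>i\<in>I. x * v i = (\<Sum>j\<in>I. of_int (a i j) * v j)"
    by metis
  then show ?thesis using alg_int_eig[of I i0 v x a] assms by blast
qed

lemma zspan_add: "y \<in> zspan I v \<Longrightarrow> z \<in> zspan I v \<Longrightarrow> y + z \<in> zspan I v"
proof -
  assume "y \<in> zspan I v" "z \<in> zspan I v"
  then obtain c d where "y = (\<Sum>j\<in>I. of_int (c j) * v j)" "z = (\<Sum>j\<in>I. of_int (d j) * v j)"
    unfolding zspan_def by blast
  then have "y + z = (\<Sum>j\<in>I. of_int (c j + d j) * v j)"
    by (simp add: sum.distrib distrib_right)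
  then show ?thesis unfolding zspan_def mem_Collect_eq by (intro exI[of _ "\<lambda>j. c j + d j"])
qed

lemma zspan_smult: "y \<in> zspan I v \<Longrightarrow> of_int k * y \<in> zspan I v"
proof -
  assume "y \<in> zspan I v"
  then obtain c where "y = (\<Sum>j\<in>I. of_int (c j) * v j)"
    unfolding zspan_def by blast
  then have "of_int k * y = (\<Sum>j\<in>I. of_int (k * c j) * v j)"
    by (simp add: sum_distrib_left mult.assoc)
  then show ?thesis unfolding zspan_def mem_Collect_eq by (intro exI[of _ "\<lambda>j. k * c j"])
qed

lemma zspan_0: "0 \<in> zspan I v"
  unfolding zspan_def by (rule CollectI, rule exI[of _ "\<lambda>_. 0"]) simp

lemma zspan_sum: "finite A \<Longrightarrow> (\<And>a. a \<in> A \<Longrightarrow> f a \<in> zspan I v) \<Longrightarrow> (\<Sum>a\<in>A. f a) \<in> zspan I v"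
  by (induction A rule: finite_induct) (auto intro: zspan_add zspan_0)

lemma zspan_base: assumes "finite I" "i \<in> I" shows "v i \<in> zspan I v"
proof -
  have "(\<Sum>j\<in>I. of_int (if j = i then 1 else 0) * v j) = (\<Sum>j\<in>I. if j = i then v j else 0)"
    by (rule sum.cong) auto
  also have "\<dots> = v i" using assms by (simp add: sum.delta)
  finally show ?thesis unfolding zspan_def mem_Collect_eq by (intro exI[of _ "\<lambda>j. if j = i then 1 else 0"]) simp
qed

lemma alg_int_powers:
  assumes "algebraic_int (x::complex)"
  shows "\<exists>m>0. \<forall>a. x ^ a \<in> zspan {..<m} (\<lambda>i. x ^ i)"
proof -
  obtain p where p: "lead_coeff p = 1" "\<forall>i. coeff p i \<in> \<int>" "poly p x = 0"
    using assms by (auto elim: algebraic_int.cases)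
  define m where "m = degree p"
  have "m > 0"
  proof (rule ccontr)
    assume "\<not> m > 0"
    then have "degree p = 0" by (simp add: m_def)
    then have "p = [:1:]" using p(1) by (metis degree_0_id)
    then show False using p(3) by simp
  qed
  have xm: "x ^ m = - (\<Sum>i<m. coeff p i * x ^ i)"
  proof -
    have "poly p x = (\<Sum>i\<le>m. coeff p i * x ^ i)" by (simp add: poly_altdef m_def)
    also have "\<dots> = (\<Sum>i<m. coeff p i * x ^ i) + x ^ m"
      using p(1) by (simp add: lessThan_Suc_atMost[symmetric] m_def)
    finally show ?thesis using p(3) by (simp add: eq_neg_iff_add_eq_0 add.commute)
  qed
  have "x ^ a \<in> zspan {..<m} (\<lambda>i. x ^ i)" for a
  proof (induction a rule: less_induct)
    case (less a)
    show ?case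
    proof (cases "a < m")
      case True then show ?thesis by (intro zspan_base) auto
    next
      case False
      have "x ^ a = x ^ (a - m) * x ^ m" using False by (simp add: power_add[symmetric])
      also have "\<dots> = (\<Sum>i<m. (- coeff p i) * x ^ (a - m + i))"
        by (simp add: xm sum_distrib_left power_add sum_negf algebra_simps)
      finally have eq: "x ^ a = (\<Sum>i<m. (- coeff p i) * x ^ (a - m + i))" .
      show ?thesis unfolding eq
      proof (rule zspan_sum)
        fix i assume i: "i \<in> {..<m}"
        obtain c where c: "coeff p i = of_int c" using p(2) by (meson Ints_cases)
        have "x ^ (a - m + i) \<in> zspan {..<m} (\<lambda>i. x ^ i)" using i False \<open>m>0\<close> by (intro less) auto
        then have "of_int (-c) * x ^ (a - m + i) \<in> zspan {..<m} (\<lambda>i. x ^ i)" by (rule zspan_smult)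
        then show "(- coeff p i) * x ^ (a - m + i) \<in> zspan {..<m} (\<lambda>i. x ^ i)" using c by simp
      qed simp
    qed
  qed
  then show ?thesis using \<open>m > 0\<close> by blast
qed

lemma zspan_mult2:
  assumes "y \<in> zspan I v" "z \<in> zspan J u" "finite I" "finite J"
  shows "y * z \<in> zspan (I \<times> J) (\<lambda>(i,j). v i * u j)"
proof -
  obtain c d where "y = (\<Sum>i\<in>I. of_int (c i) * v i)" "z = (\<Sum>j\<in>J. of_int (d j) * u j)"
    using assms unfolding zspan_def by blast
  then have "y * z = (\<Sum>(i,j)\<in>I \<times> J. of_int (c i * d j) * (v i * u j))"
    by (simp add: sum_product sum.cartesian_product algebra_simps)
  then show ?thesis unfolding zspan_def by (auto intro!: exI[of _ "\<lambda>(i,j). c i * d j"]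
        simp: case_prod_unfold)
qed

lemma alg_int_add_mult:
  assumes "algebraic_int (x::complex)" "algebraic_int (y::complex)"
  shows "algebraic_int (x + y) \<and> algebraic_int (x * y)"
proof -
  obtain m1 where m1: "m1 > 0" "\<forall>a. x ^ a \<in> zspan {..<m1} (\<lambda>i. x ^ i)"
    using alg_int_powers[OF assms(1)] by blast
  obtain m2 where m2: "m2 > 0" "\<forall>a. y ^ a \<in> zspan {..<m2} (\<lambda>i. y ^ i)"
    using alg_int_powers[OF assms(2)] by blast
  define I where "I = {..<m1} \<times> {..<m2}"
  define v where "v = (\<lambda>(i::nat,j::nat). x ^ i * y ^ j)"
  have mem: "x ^ a * y ^ b \<in> zspan I v" for a b
    using zspan_mult2[OF m1(2)[rule_format, of a] m2(2)[rule_format, of b]]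
    by (simp add: I_def v_def)
  have fin: "finite I" and i0: "(0,0) \<in> I" and v0: "v (0,0) \<noteq> 0"
    using m1 m2 by (auto simp: I_def v_def)
  have "algebraic_int (x + y)"
  proof (rule zspan_alg_int[of I "(0,0)" v], fact fin, fact i0, fact v0, intro ballI)
    fix ij assume "ij \<in> I"
    obtain i j where ij: "ij = (i,j)" by fastforce
    have "(x + y) * v ij = x ^ Suc i * y ^ j + x ^ i * y ^ Suc j"
      by (simp add: ij v_def algebra_simps)
    then show "(x + y) * v ij \<in> zspan I v" using mem[of "Suc i" j] mem[of i "Suc j"] by (metis zspan_add)
  qed
  moreover have "algebraic_int (x * y)"
  proof (rule zspan_alg_int[of I "(0,0)" v], fact fin, fact i0, fact v0, intro ballI)
    fix ij assume "ij \<in> I"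
    obtain i j where ij: "ij = (i,j)" by fastforce
    have "(x * y) * v ij = x ^ Suc i * y ^ Suc j"
      by (simp add: ij v_def algebra_simps)
    then show "(x * y) * v ij \<in> zspan I v" using mem[of "Suc i" "Suc j"] by metis
  qed
  ultimately show ?thesis by blast
qed

lemma alg_int_add: "algebraic_int (x::complex) \<Longrightarrow> algebraic_int y \<Longrightarrow> algebraic_int (x + y)"
  using alg_int_add_mult by blast

lemma alg_int_mult: "algebraic_int (x::complex) \<Longrightarrow> algebraic_int y \<Longrightarrow> algebraic_int (x * y)"
  using alg_int_add_mult by blast

lemma alg_int_1: "algebraic_int (1::complex)"
  by (rule int_imp_algebraic_int) simp

lemma alg_int_prod: "finite A \<Longrightarrow> (\<And>a. a \<in> A \<Longrightarrow> algebraic_int (f a :: complex)) \<Longrightarrow> algebraic_int (\<Prod>a\<in>A. f a)"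
  by (induction A rule: finite_induct) (auto intro: alg_int_mult alg_int_1)


definition sQ :: "rat \<Rightarrow> complex \<Rightarrow> complex" where "sQ r z = of_rat r * z"

interpretation Q: vector_space sQ
  by unfold_locales (auto simp: sQ_def algebra_simps of_rat_add of_rat_mult)

interpretation QQ: vector_space_pair sQ sQ ..

lemma sf0: "subfield_C L \<Longrightarrow> 0 \<in> L" and sf1: "subfield_C L \<Longrightarrow> 1 \<in> L"
  and sfadd: "subfield_C L \<Longrightarrow> x \<in> L \<Longrightarrow> y \<in> L \<Longrightarrow> x + y \<in> L"
  and sfdiff: "subfield_C L \<Longrightarrow> x \<in> L \<Longrightarrow> y \<in> L \<Longrightarrow> x - y \<in> L"
  and sfmult: "subfield_C L \<Longrightarrow> x \<in> L \<Longrightarrow> y \<in> L \<Longrightarrow> x * y \<in> L"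
  and sfinv: "subfield_C L \<Longrightarrow> x \<in> L \<Longrightarrow> inverse x \<in> L"
  unfolding subfield_C_def by auto

lemma sfuminus: "subfield_C L \<Longrightarrow> x \<in> L \<Longrightarrow> - x \<in> L"
  using sfdiff[of L 0 x] sf0[of L] by simp

lemma sfdivide: "subfield_C L \<Longrightarrow> x \<in> L \<Longrightarrow> y \<in> L \<Longrightarrow> x / y \<in> L"
  by (simp add: divide_inverse sfmult sfinv)

lemma sfpow: "subfield_C L \<Longrightarrow> x \<in> L \<Longrightarrow> x ^ k \<in> L"
  by (induction k) (auto intro: sfmult sf1)

lemma sfsum: "subfield_C L \<Longrightarrow> (\<And>a. a \<in> A \<Longrightarrow> f a \<in> L) \<Longrightarrow> (\<Sum>a\<in>A. f a) \<in> L"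
  by (induction A rule: infinite_finite_induct) (auto intro: sfadd sf0)

lemma sfprod: "subfield_C L \<Longrightarrow> (\<And>a. a \<in> A \<Longrightarrow> f a \<in> L) \<Longrightarrow> (\<Prod>a\<in>A. f a) \<in> L"
  by (induction A rule: infinite_finite_induct) (auto intro: sfmult sf1)

lemma sfnat: "subfield_C L \<Longrightarrow> of_nat k \<in> L"
  by (induction k) (auto intro: sfadd sf0 sf1)

lemma sfint: "subfield_C L \<Longrightarrow> of_int k \<in> L"
proof -
  assume L: "subfield_C L"
  have "k = int (nat k) - int (nat (-k))" by simp
  then have "(of_int k :: complex) = of_nat (nat k) - of_nat (nat (-k))" by (metis of_int_diff of_int_of_nat_eq)
  then show ?thesis using L by (simp add: sfdiff sfnat)
qed

lemma sfrat: "subfield_C L \<Longrightarrow> of_rat r \<in> L"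
proof -
  assume L: "subfield_C L"
  obtain a b where "b \<noteq> 0" "r = Rat.Fract a b" by (cases r) (metis less_irrefl)
  then have "of_rat r = (of_int a / of_int b :: complex)" by (simp add: of_rat_rat)
  then show ?thesis using L by (simp add: sfdivide sfint)
qed

lemma nf_span:
  assumes "number_field L"
  obtains B where "finite B" "B \<subseteq> L" "L \<subseteq> Q.span B"
proof -
  from assms obtain B where B: "finite B" "B \<subseteq> L"
    "\<forall>x\<in>L. \<exists>c::complex \<Rightarrow> rat. x = (\<Sum>b\<in>B. of_rat (c b) * b)"
    unfolding number_field_def by blast
  have "L \<subseteq> Q.span B"
  proof
    fix x assume "x \<in> L"
    then obtain c where "x = (\<Sum>b\<in>B. of_rat (c b) * b)" using B(3) by blast
    then have "x = (\<Sum>b\<in>B. sQ (c b) b)" by (simp add: sQ_def)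
    then show "x \<in> Q.span B" by (simp add: Q.span_sum Q.span_scale Q.span_base)
  qed
  then show ?thesis using that B by blast
qed

lemma powers_indep:
  assumes "\<forall>k<N. x ^ k \<notin> Q.span ((\<lambda>i. x ^ i) ` {..<k})"
  shows "Q.independent ((\<lambda>i. x ^ i) ` {..<N}) \<and> inj_on (\<lambda>i. x ^ i) {..<N}"
  using assms
proof (induction N)
  case 0 then show ?case using Q.independent_empty by simp
next
  case (Suc N)
  then have IH: "Q.independent ((\<lambda>i. x ^ i) ` {..<N}) \<and> inj_on (\<lambda>i. x ^ i) {..<N}" by simp
  have nin: "x ^ N \<notin> Q.span ((\<lambda>i. x ^ i) ` {..<N})" using Suc.prems by simp
  have eq: "(\<lambda>i. x ^ i) ` {..<Suc N} = insert (x ^ N) ((\<lambda>i. x ^ i) ` {..<N})"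
    by (simp add: lessThan_Suc)
  have "Q.independent ((\<lambda>i. x ^ i) ` {..<Suc N})"
    unfolding eq using IH nin by (intro Q.independent_insertI) auto
  moreover have "inj_on (\<lambda>i. x ^ i) {..<Suc N}"
    unfolding lessThan_Suc using IH nin Q.span_base by (auto simp: inj_on_insert)
  ultimately show ?case by blast
qed

lemma minpoly_data:
  assumes L: "number_field L" and x: "x \<in> L"
  shows "\<exists>m>0. \<exists>c::nat \<Rightarrow> rat. x ^ m = (\<Sum>i<m. of_rat (c i) * x ^ i) \<and>
     Q.independent ((\<lambda>i. x ^ i) ` {..<m}) \<and> inj_on (\<lambda>i. x ^ i) {..<m}"
proof -
  obtain B where B: "finite B" "B \<subseteq> L" "L \<subseteq> Q.span B" using nf_span[OF L] by blast
  have sf: "subfield_C L" using L unfolding number_field_def by blast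
  define P where "P = (\<lambda>k. x ^ k \<in> Q.span ((\<lambda>i. x ^ i) ` {..<k}))"
  have ex: "\<exists>k. P k"
  proof (rule ccontr)
    assume "\<not> (\<exists>k. P k)"
    then have "Q.independent ((\<lambda>i. x ^ i) ` {..<Suc (card B)}) \<and> inj_on (\<lambda>i. x ^ i) {..<Suc (card B)}"
      by (intro powers_indep) (auto simp: P_def)
    moreover have "(\<lambda>i. x ^ i) ` {..<Suc (card B)} \<subseteq> Q.span B"
      using B(3) sfpow[OF sf x] by auto
    ultimately have "card ((\<lambda>i. x ^ i) ` {..<Suc (card B)}) \<le> card B"
      using Q.independent_span_bound[OF B(1)] by blast
    moreover have "card ((\<lambda>i. x ^ i) ` {..<Suc (card B)}) = Suc (card B)"
      using \<open>Q.independent _ \<and> inj_on _ _\<close> by (simp add: card_image)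
    ultimately show False by simp
  qed
  define m where "m = (LEAST k. P k)"
  have Pm: "P m" unfolding m_def using ex by (rule LeastI_ex)
  have nP: "\<forall>k<m. \<not> P k" unfolding m_def using not_less_Least by blast
  have ii: "Q.independent ((\<lambda>i. x ^ i) ` {..<m}) \<and> inj_on (\<lambda>i. x ^ i) {..<m}"
    using nP by (intro powers_indep) (auto simp: P_def)
  have "m > 0"
  proof (rule ccontr)
    assume "\<not> m > 0"
    then have "m = 0" by simp
    then show False using Pm by (simp add: P_def)
  qed
  from Pm obtain u where u: "x ^ m = (\<Sum>v\<in>(\<lambda>i. x ^ i) ` {..<m}. sQ (u v) v)"
    unfolding P_def Q.span_finite[OF finite_imageI[OF finite_lessThan]] by blast
  also have "\<dots> = (\<Sum>i<m. of_rat (u (x ^ i)) * x ^ i)"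
    using ii by (simp add: sum.reindex sQ_def)
  finally have "x ^ m = (\<Sum>i<m. of_rat (u (x ^ i)) * x ^ i)" .
  then show ?thesis using ii \<open>m > 0\<close> by (intro exI[of _ m] conjI exI[of _ "\<lambda>i. u (x ^ i)"]) auto
qed


definition lin :: "(complex \<Rightarrow> complex) \<Rightarrow> bool" where
  "lin f \<longleftrightarrow> (\<forall>a b. f (a + b) = f a + f b) \<and> (\<forall>r a. f (of_rat r * a) = of_rat r * f a)"

lemma linear_lin: "Vector_Spaces.linear sQ sQ f \<Longrightarrow> lin f"
  unfolding lin_def Vector_Spaces.linear_def module_hom_def module_hom_axioms_def
  by (auto simp: sQ_def)

lemma lin_0: "lin f \<Longrightarrow> f 0 = 0"
  unfolding lin_def by (metis add_0 add_cancel_right_right)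

lemma lin_sum_rat: "lin f \<Longrightarrow> f (\<Sum>i\<in>A. of_rat (c i) * y i) = (\<Sum>i\<in>A. of_rat (c i) * f (y i))"
  by (induction A rule: infinite_finite_induct) (auto simp: lin_0 lin_def)

lemma lin_sum_Rats: "lin f \<Longrightarrow> (\<And>i. i \<in> A \<Longrightarrow> c i \<in> \<rat>) \<Longrightarrow>
   f (\<Sum>i\<in>A. c i * y i) = (\<Sum>i\<in>A. c i * f (y i))"
proof (induction A rule: infinite_finite_induct)
  case (insert a A)
  obtain r where "c a = of_rat r" using insert.prems(2) by (meson Rats_cases insertI1)
  then show ?case using insert by (auto simp: lin_def)
qed (auto simp: lin_0)

definition opP :: "complex \<Rightarrow> complex poly \<Rightarrow> (complex \<Rightarrow> complex) \<Rightarrow> complex \<Rightarrow> complex" where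
  "opP b P f z = (\<Sum>k\<le>degree P. coeff P k * f (b ^ k * z))"

lemma opP_bound: "degree P \<le> N \<Longrightarrow> opP b P f z = (\<Sum>k\<le>N. coeff P k * f (b ^ k * z))"
  unfolding opP_def
  by (rule sum.mono_neutral_left) (auto simp: coeff_eq_0)

lemma opP_lin: assumes f: "lin f" shows "lin (opP b P f)"
proof -
  have a: "f (b ^ k * (x + y)) = f (b ^ k * x) + f (b ^ k * y)" for k x y
    using f unfolding lin_def by (simp add: distrib_left)
  have s: "f (b ^ k * (of_rat r * x)) = of_rat r * f (b ^ k * x)" for k x r
  proof -
    have "b ^ k * (of_rat r * x) = of_rat r * (b ^ k * x)" by (simp add: algebra_simps)
    then show ?thesis using f unfolding lin_def by metis
  qed
  show ?thesis unfolding lin_def opP_def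
    by (simp only: a s) (simp add: sum.distrib distrib_left sum_distrib_left mult.left_commute)
qed

lemma opP_one: "opP b 1 f z = f z"
  by (simp add: opP_def)

lemma opP_factor: "opP b ([:-r, 1:] * P) f z = opP b P f (b * z) - r * opP b P f z"
proof -
  define D where "D = degree P"
  have d: "degree ([:-r, 1:] * P) \<le> Suc D"
    using degree_mult_le[of "[:-r,1:]" P] by (simp add: D_def)
  have c: "coeff ([:-r, 1:] * P) k = (case k of 0 \<Rightarrow> 0 | Suc j \<Rightarrow> coeff P j) - r * coeff P k" for k
    by (cases k) (simp_all add: mult_pCons_left)
  have "opP b ([:-r, 1:] * P) f z = (\<Sum>k\<le>Suc D. coeff ([:-r, 1:] * P) k * f (b ^ k * z))"
    by (rule opP_bound[OF d])
  also have "\<dots> = (\<Sum>k\<le>Suc D. (case k of 0 \<Rightarrow> 0 | Suc j \<Rightarrow> coeff P j) * f (b ^ k * z)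
                  - r * (coeff P k * f (b ^ k * z)))"
    by (rule sum.cong[OF refl]) (simp only: c left_diff_distrib mult.assoc)
  also have "\<dots> = (\<Sum>k\<le>Suc D. (case k of 0 \<Rightarrow> 0 | Suc j \<Rightarrow> coeff P j) * f (b ^ k * z))
                  - r * (\<Sum>k\<le>Suc D. coeff P k * f (b ^ k * z))"
    by (simp only: sum_subtractf sum_distrib_left)
  also have "(\<Sum>k\<le>Suc D. (case k of 0 \<Rightarrow> 0 | Suc j \<Rightarrow> coeff P j) * f (b ^ k * z))
      = (\<Sum>j\<le>D. coeff P j * f (b ^ j * (b * z)))"
    by (subst sum.atMost_Suc_shift) (simp add: mult.assoc mult.commute mult.left_commute)
  also have "\<dots> = opP b P f (b * z)" by (simp add: opP_def D_def)
  also have "(\<Sum>k\<le>Suc D. coeff P k * f (b ^ k * z)) = opP b P f z"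
    by (rule opP_bound[symmetric]) (simp add: D_def)
  finally show ?thesis .
qed

lemma opP_Rats: assumes "lin f" "\<forall>k. coeff P k \<in> \<rat>"
  shows "opP b P f z = f (poly P b * z)"
proof -
  have "poly P b * z = (\<Sum>k\<le>degree P. coeff P k * (b ^ k * z))"
    by (simp add: poly_altdef sum_distrib_right mult.assoc)
  then show ?thesis unfolding opP_def
    using lin_sum_Rats[OF assms(1), of "{..degree P}" "coeff P" "\<lambda>k. b ^ k * z"] assms(2) by simp
qed

definition Eig :: "complex set \<Rightarrow> (complex \<times> complex) list \<Rightarrow> (complex \<Rightarrow> complex) \<Rightarrow> bool" where
  "Eig L C f \<longleftrightarrow> lin f \<and> (\<forall>(y,l)\<in>set C. \<forall>z\<in>L. f (y * z) = l * f z)"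

lemma opP_Eig:
  assumes sf: "subfield_C L" and b: "b \<in> L" and E: "Eig L C f"
  shows "Eig L C (opP b P f)"
proof -
  have key: "opP b P f (y * z) = l * opP b P f z" if yl: "(y,l) \<in> set C" and z: "z \<in> L" for y l z
  proof -
    have "f (b ^ k * (y * z)) = l * f (b ^ k * z)" for k
    proof -
      have "b ^ k * z \<in> L" using sf b z by (intro sfmult sfpow)
      then have "f (y * (b ^ k * z)) = l * f (b ^ k * z)" using E yl unfolding Eig_def by auto
      then show ?thesis by (simp add: algebra_simps)
    qed
    then show ?thesis unfolding opP_def by (simp add: sum_distrib_left algebra_simps)
  qed
  show ?thesis using key opP_lin E unfolding Eig_def by auto
qed

lemma eigen_step_mset:
  assumes sf: "subfield_C L" and b: "b \<in> L" and E: "Eig L C f" and nz: "\<exists>z\<in>L. f z \<noteq> 0"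
  shows "(\<forall>z\<in>L. opP b (\<Prod>r\<in>#M. [:-r, 1:]) f z = 0) \<Longrightarrow> \<exists>r g. Eig L ((b,r)#C) g \<and> (\<exists>z\<in>L. g z \<noteq> 0)"
proof (induction M)
  case empty
  then show ?case using nz by (simp add: opP_one)
next
  case (add r M)
  define g where "g = opP b (\<Prod>r\<in>#M. [:-r, 1:]) f"
  show ?case
  proof (cases "\<exists>z\<in>L. g z \<noteq> 0")
    case True
    have Eg: "Eig L C g" unfolding g_def by (rule opP_Eig[OF sf b E])
    have "\<forall>z\<in>L. g (b * z) = r * g z"
    proof
      fix z assume "z \<in> L"
      then have "opP b ([:-r, 1:] * (\<Prod>r\<in>#M. [:-r, 1:])) f z = 0" using add.prems by simp
      then show "g (b * z) = r * g z" unfolding opP_factor g_def by simp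
    qed
    then have "Eig L ((b,r)#C) g" using Eg unfolding Eig_def by auto
    then show ?thesis using True by blast
  next
    case False
    then show ?thesis using add.IH unfolding g_def by blast
  qed
qed

lemma alg_poly:
  assumes L: "number_field L" and x: "x \<in> L"
  shows "\<exists>P m. m > 0 \<and> degree P = m \<and> lead_coeff P = 1 \<and> (\<forall>k. coeff P k \<in> \<rat>) \<and> poly P x = 0 \<and>
     Q.independent ((\<lambda>i. x ^ i) ` {..<m}) \<and> inj_on (\<lambda>i. x ^ i) {..<m}"
proof -
  obtain m c where m: "m > 0" "x ^ m = (\<Sum>i<m. of_rat (c i) * x ^ i)"
    "Q.independent ((\<lambda>i. x ^ i) ` {..<m})" "inj_on (\<lambda>i. x ^ i) {..<m}"
    using minpoly_data[OF L x] by blast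
  define P :: "complex poly" where "P = monom 1 m - (\<Sum>i<m. monom (of_rat (c i)) i)"
  have cP: "coeff P k = (if k = m then 1 else 0) - (if k < m then of_rat (c k) else 0)" for k
    unfolding P_def by (simp add: coeff_sum coeff_monom sum.delta)
  have dle: "degree P \<le> m"
    by (rule degree_le) (auto simp: cP)
  have cm: "coeff P m = 1" by (simp add: cP)
  then have dP: "degree P = m" using dle by (metis le_degree le_antisym one_neq_zero)
  have "\<forall>k. coeff P k \<in> \<rat>" by (simp add: cP)
  moreover have "poly P x = 0" using m(2) by (simp add: P_def poly_sum poly_monom)
  ultimately show ?thesis using m dP cm by (intro exI[of _ P] exI[of _ m]) auto
qed

lemma monic_decompose: "lead_coeff P = 1 \<Longrightarrow> (\<Prod>r\<in>#proots P. [:-r, 1:]) = (P :: complex poly)"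
  using complex_poly_decompose_multiset[of P] by simp

lemma eigen_step:
  assumes L: "number_field L" and b: "b \<in> L" and E: "Eig L C f" and nz: "\<exists>z\<in>L. f z \<noteq> 0"
  shows "\<exists>r g. Eig L ((b,r)#C) g \<and> (\<exists>z\<in>L. g z \<noteq> 0)"
proof -
  have sf: "subfield_C L" using L unfolding number_field_def by blast
  obtain P m where P: "lead_coeff P = 1" "\<forall>k. coeff P k \<in> \<rat>" "poly P b = 0"
    using alg_poly[OF L b] by blast
  have "\<forall>z\<in>L. opP b (\<Prod>r\<in>#proots P. [:-r, 1:]) f z = 0"
  proof
    fix z assume "z \<in> L"
    have "lin f" using E unfolding Eig_def by blast
    then have "opP b P f z = f (poly P b * z)" using opP_Rats P(2) by blast
    then show "opP b (\<Prod>r\<in>#proots P. [:-r, 1:]) f z = 0"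
      using P(3) lin_0[OF \<open>lin f\<close>] monic_decompose[OF P(1)] by simp
  qed
  then show ?thesis using eigen_step_mset[OF sf b E nz] by blast
qed

lemma eig_collect:
  assumes L: "number_field L"
  shows "set bs \<subseteq> L \<Longrightarrow> Eig L C f \<Longrightarrow> (\<exists>z\<in>L. f z \<noteq> 0) \<Longrightarrow>
    \<exists>C' g. Eig L C' g \<and> (\<exists>z\<in>L. g z \<noteq> 0) \<and> set C \<subseteq> set C' \<and> (\<forall>b\<in>set bs. \<exists>l. (b,l) \<in> set C')"
proof (induction bs arbitrary: C f)
  case Nil
  then show ?case by (intro exI[of _ C] exI[of _ f]) auto
next
  case (Cons b bs)
  have "b \<in> L" using Cons.prems(1) by simp
  obtain r g where g: "Eig L ((b,r)#C) g" "\<exists>z\<in>L. g z \<noteq> 0"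
    using eigen_step[OF L \<open>b \<in> L\<close> Cons.prems(2,3)] by blast
  obtain C' h where h: "Eig L C' h" "\<exists>z\<in>L. h z \<noteq> 0" "set ((b,r)#C) \<subseteq> set C'"
    "\<forall>b\<in>set bs. \<exists>l. (b,l) \<in> set C'"
    using Cons.IH[OF _ g] Cons.prems(1) by auto
  then show ?case by fastforce
qed


lemma coeff_lin_pow: "coeff ([:a, 1:] ^ Suc k) k = of_nat (Suc k) * (a :: complex)"
proof (induction k)
  case 0 then show ?case by simp
next
  case (Suc k)
  have "[:a, 1:] ^ Suc (Suc k) = pCons a [:1:] * [:a, 1:] ^ Suc k" by simp
  then have "coeff ([:a, 1:] ^ Suc (Suc k)) (Suc k) = a * coeff ([:a, 1:] ^ Suc k) (Suc k) + coeff ([:a, 1:] ^ Suc k) k"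
    by (simp only: mult_pCons_left) simp
  also have "\<dots> = a + of_nat (Suc k) * a" using Suc coeff_linear_power[of a "Suc k"] by simp
  finally show ?case by (simp add: algebra_simps)
qed

lemma prod_rep: "(\<Prod>r\<in>#replicate_mset n x. f r) = (f x :: 'a :: comm_monoid_mult) ^ n"
  by (induction n) auto

lemma mset_all_eq: "(\<forall>r\<in>#M. r = x) \<Longrightarrow> M = replicate_mset (size M) x"
  by (induction M) auto

lemma x_step:
  assumes L: "number_field L" and x: "x \<in> L" and nq: "x \<notin> \<rat>"
  shows "\<exists>\<mu> g. \<mu> \<noteq> x \<and> Eig L [(x,\<mu>)] g \<and> (\<exists>z\<in>L. g z \<noteq> 0)"
proof -
  have sf: "subfield_C L" using L unfolding number_field_def by blast
  obtain P m where P: "m > 0" "degree P = m" "lead_coeff P = 1" "\<forall>k. coeff P k \<in> \<rat>" "poly P x = 0"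
    "Q.independent ((\<lambda>i. x ^ i) ` {..<m})" "inj_on (\<lambda>i. x ^ i) {..<m}"
    using alg_poly[OF L x] by blast
  define M where "M = proots P"
  have PM: "P = (\<Prod>r\<in>#M. [:-r, 1:])" unfolding M_def using monic_decompose[OF P(3)] by simp
  have "\<exists>\<mu>. \<mu> \<in># M \<and> \<mu> \<noteq> x"
  proof (rule ccontr)
    assume "\<not> ?thesis"
    then have "M = replicate_mset (size M) x" by (intro mset_all_eq) blast
    moreover have "size M = m" unfolding M_def using P(2) by (simp add: size_proots_complex)
    ultimately have "P = [:-x, 1:] ^ m" using PM by (metis prod_rep)
    then have "coeff P (m - 1) = of_nat m * (- x)"
      using coeff_lin_pow[of "-x" "m - 1"] P(1) by simp
    then have "x = - coeff P (m - 1) / of_nat m" using P(1) by (simp add: field_simps)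
    then have "x \<in> \<rat>" using P(4) by (simp add: Rats_divide Rats_minus_iff)
    then show False using nq by simp
  qed
  then obtain \<mu> where mu: "\<mu> \<in># M" "\<mu> \<noteq> x" by blast
  define M' where "M' = M - {#\<mu>#}"
  define Qp where "Qp = (\<Prod>r\<in>#M'. [:-r, 1:])"
  have PQ: "P = [:-\<mu>, 1:] * Qp"
    unfolding PM Qp_def M'_def using mu(1) by (metis image_mset_add_mset insert_DiffM prod_mset.add_mset)
  have "lead_coeff P = lead_coeff [:-\<mu>, 1:] * lead_coeff Qp" unfolding PQ by (rule lead_coeff_mult)
  then have lQ: "lead_coeff Qp = 1" using P(3) by simp
  then have "Qp \<noteq> 0" by auto
  then have "degree P = degree [:-\<mu>, 1:] + degree Qp" unfolding PQ by (intro degree_mult_eq) auto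
  then have dQ: "degree Qp = m - 1" using P(2) by simp
  obtain g0 where g0: "Vector_Spaces.linear sQ sQ g0"
    "\<forall>v\<in>(\<lambda>i. x ^ i) ` {..<m}. g0 v = (if v = x ^ (m - 1) then 1 else 0)"
    using QQ.linear_independent_extend[OF P(6), of "\<lambda>v. if v = x ^ (m - 1) then 1 else 0"] by blast
  have lg0: "lin g0" using g0(1) by (rule linear_lin)
  define G where "G = opP x Qp g0"
  have "G 1 = (\<Sum>k\<le>m - 1. coeff Qp k * (if k = m - 1 then 1 else 0))"
    unfolding G_def opP_def dQ
  proof (rule sum.cong[OF refl])
    fix k assume k: "k \<in> {..m - 1}"
    then have km: "k < m" using P(1) by auto
    have "g0 (x ^ k) = (if x ^ k = x ^ (m - 1) then 1 else 0)" using g0(2) km by auto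
    also have "(x ^ k = x ^ (m - 1)) = (k = m - 1)"
      using P(7) km P(1) by (auto dest: inj_onD)
    finally show "coeff Qp k * g0 (x ^ k * 1) = coeff Qp k * (if k = m - 1 then 1 else 0)" by simp
  qed
  also have "\<dots> = coeff Qp (m - 1)" by (simp add: if_distrib cong: if_cong)
  also have "\<dots> = 1" using lQ dQ by simp
  finally have G1: "G 1 = 1" .
  have "\<forall>z\<in>L. G (x * z) = \<mu> * G z"
  proof
    fix z assume "z \<in> L"
    have "opP x P g0 z = 0" using opP_Rats[OF lg0 P(4)] P(5) lin_0[OF lg0] by simp
    then show "G (x * z) = \<mu> * G z" unfolding PQ opP_factor G_def by simp
  qed
  then have "Eig L [(x,\<mu>)] G" unfolding Eig_def G_def using opP_lin[OF lg0] by simp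
  moreover have "\<exists>z\<in>L. G z \<noteq> 0" using G1 sf1[OF sf] by force
  ultimately show ?thesis using mu(2) by blast
qed

lemma embedding_moves:
  assumes L: "number_field L" and x: "x \<in> L" and nq: "x \<notin> \<rat>"
  shows "\<exists>\<sigma>\<in>embeddings L. \<sigma> x \<noteq> x"
proof -
  have sf: "subfield_C L" using L unfolding number_field_def by blast
  from L obtain B where B: "finite B" "B \<subseteq> L"
    "\<forall>y\<in>L. \<exists>c::complex \<Rightarrow> rat. y = (\<Sum>b\<in>B. of_rat (c b) * b)"
    unfolding number_field_def by blast
  obtain bs where bs: "set bs = B" using finite_list[OF B(1)] by blast
  obtain \<mu> g0 where g0: "\<mu> \<noteq> x" "Eig L [(x,\<mu>)] g0" "\<exists>z\<in>L. g0 z \<noteq> 0"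
    using x_step[OF L x nq] by blast
  obtain C' g where g: "Eig L C' g" "\<exists>z\<in>L. g z \<noteq> 0" "set [(x,\<mu>)] \<subseteq> set C'"
    "\<forall>b\<in>set bs. \<exists>l. (b,l) \<in> set C'"
    using eig_collect[OF L _ g0(2,3), of bs] bs B(2) by blast
  from g(4) bs obtain lam where lam: "\<forall>b\<in>B. (b, lam b) \<in> set C'" by metis
  have lg: "lin g" using g(1) unfolding Eig_def by blast
  have eigC: "g (y * z) = l * g z" if "(y,l) \<in> set C'" "z \<in> L" for y l z
    using g(1) that unfolding Eig_def by auto
  have H: "\<exists>l. \<forall>z\<in>L. g (y * z) = l * g z" if y: "y \<in> L" for y
  proof -
    obtain c where c: "y = (\<Sum>b\<in>B. of_rat (c b) * b)" using B(3) y by blast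
    have "\<forall>z\<in>L. g (y * z) = (\<Sum>b\<in>B. of_rat (c b) * lam b) * g z"
    proof
      fix z assume z: "z \<in> L"
      have "y * z = (\<Sum>b\<in>B. of_rat (c b) * (b * z))" unfolding c by (simp add: sum_distrib_right mult.assoc)
      then have "g (y * z) = (\<Sum>b\<in>B. of_rat (c b) * g (b * z))" using lin_sum_rat[OF lg] by simp
      also have "\<dots> = (\<Sum>b\<in>B. of_rat (c b) * (lam b * g z))"
        using eigC lam z by (intro sum.cong) auto
      finally show "g (y * z) = (\<Sum>b\<in>B. of_rat (c b) * lam b) * g z"
        by (simp add: sum_distrib_right mult.assoc)
    qed
    then show ?thesis by blast
  qed
  have g1: "g 1 \<noteq> 0"
  proof
    assume g10: "g 1 = 0"
    have "g y = 0" if yL: "y \<in> L" for y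
    proof -
      obtain l where "\<forall>z\<in>L. g (y * z) = l * g z" using H[OF yL] by blast
      then have "g (y * 1) = l * g 1" using sf1[OF sf] by blast
      then show ?thesis using g10 by simp
    qed
    then show False using g(2) by blast
  qed
  have Hy: "g (y * z) = g y / g 1 * g z" if yz: "y \<in> L" "z \<in> L" for y z
  proof -
    obtain l where l: "\<forall>z\<in>L. g (y * z) = l * g z" using H[OF yz(1)] by blast
    then have "g y = l * g 1" using sf1[OF sf] by (metis mult_1_right)
    then have "l = g y / g 1" using g1 by simp
    then show ?thesis using l yz(2) by simp
  qed
  define \<sigma> where "\<sigma> = restrict (\<lambda>y. g y / g 1) L"
  have "\<sigma> \<in> embeddings L"
    unfolding embeddings_def
  proof (intro CollectI conjI ballI)
    show "\<sigma> \<in> extensional L" unfolding \<sigma>_def by simp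
    show "\<sigma> 1 = 1" unfolding \<sigma>_def using sf1[OF sf] g1 by simp
    fix a b assume a: "a \<in> L" and b: "b \<in> L"
    show "\<sigma> (a + b) = \<sigma> a + \<sigma> b" unfolding \<sigma>_def using a b sfadd[OF sf a b] lg
      by (simp add: lin_def add_divide_distrib)
    show "\<sigma> (a * b) = \<sigma> a * \<sigma> b" unfolding \<sigma>_def using a b sfmult[OF sf a b] Hy[OF a b]
      by simp
  qed
  moreover have "\<sigma> x = \<mu>"
  proof -
    have "(x, \<mu>) \<in> set C'" using g(3) by simp
    then have "g (x * 1) = \<mu> * g 1" using eigC sf1[OF sf] by blast
    then show ?thesis unfolding \<sigma>_def using x g1 by simp
  qed
  ultimately show ?thesis using g0(1) by blast
qed

lemma fixed_rat:
  assumes "number_field L" "x \<in> L" "\<forall>\<sigma>\<in>embeddings L. \<sigma> x = x"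
  shows "x \<in> \<rat>"
  using embedding_moves[OF assms(1,2)] assms(3) by blast

lemma fixed_int:
  assumes "number_field L" "x \<in> L" "\<forall>\<sigma>\<in>embeddings L. \<sigma> x = x" "algebraic_int x"
  shows "x \<in> \<int>"
  using rational_algebraic_int_is_int[OF assms(4) fixed_rat[OF assms(1-3)]] .


context
  fixes L :: "complex set" and \<sigma> :: "complex \<Rightarrow> complex"
  assumes sf: "subfield_C L" and emb: "\<sigma> \<in> embeddings L"
begin

lemma emb_add: "x \<in> L \<Longrightarrow> y \<in> L \<Longrightarrow> \<sigma> (x + y) = \<sigma> x + \<sigma> y"
  using emb unfolding embeddings_def by blast

lemma emb_mult: "x \<in> L \<Longrightarrow> y \<in> L \<Longrightarrow> \<sigma> (x * y) = \<sigma> x * \<sigma> y"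
  using emb unfolding embeddings_def by blast

lemma emb_1: "\<sigma> 1 = 1"
  using emb unfolding embeddings_def by blast

lemma emb_0: "\<sigma> 0 = 0"
  using emb_add[OF sf0[OF sf] sf0[OF sf]] by simp

lemma emb_uminus: "x \<in> L \<Longrightarrow> \<sigma> (- x) = - \<sigma> x"
  using emb_add[of x "-x"] sfuminus[OF sf] emb_0 by (simp add: add.commute eq_neg_iff_add_eq_0)

lemma emb_diff: "x \<in> L \<Longrightarrow> y \<in> L \<Longrightarrow> \<sigma> (x - y) = \<sigma> x - \<sigma> y"
  using emb_add[of x "-y"] emb_uminus[of y] sfuminus[OF sf] by simp

lemma emb_nat: "\<sigma> (of_nat k) = of_nat k"
  by (induction k) (simp_all add: emb_0 emb_1 emb_add sfnat[OF sf] sf1[OF sf])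

lemma emb_int: "\<sigma> (of_int k) = of_int k"
proof -
  have "(of_int k :: complex) = of_nat (nat k) - of_nat (nat (-k))"
    by (metis of_int_diff of_int_of_nat_eq nat_0_le nat_le_0 neg_0_le_iff_le le_cases diff_0_right
        diff_0 add.inverse_inverse of_int_0 of_nat_0 nat_zero_as_int)
  then show ?thesis using emb_diff[of "of_nat (nat k)" "of_nat (nat (-k))"] sfnat[OF sf] emb_nat by simp
qed

lemma emb_inverse: "x \<in> L \<Longrightarrow> \<sigma> (inverse x) = inverse (\<sigma> x)"
proof (cases "x = 0")
  case True then show ?thesis by (simp add: emb_0)
next
  case False
  assume x: "x \<in> L"
  have "\<sigma> x * \<sigma> (inverse x) = 1" using emb_mult[OF x sfinv[OF sf x]] False emb_1 by simp
  then show ?thesis by (metis inverse_unique)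
qed

lemma emb_nz: "x \<in> L \<Longrightarrow> x \<noteq> 0 \<Longrightarrow> \<sigma> x \<noteq> 0"
  using emb_inverse[of x] emb_mult[of x "inverse x"] sfinv[OF sf] emb_1 by force

lemma emb_inj: "x \<in> L \<Longrightarrow> y \<in> L \<Longrightarrow> \<sigma> x = \<sigma> y \<Longrightarrow> x = y"
  using emb_diff[of x y] emb_nz[of "x - y"] sfdiff[OF sf] by force

lemma emb_prod: "(\<And>a. a \<in> A \<Longrightarrow> f a \<in> L) \<Longrightarrow> \<sigma> (\<Prod>a\<in>A. f a) = (\<Prod>a\<in>A. \<sigma> (f a))"
proof (induction A rule: infinite_finite_induct)
  case (insert a A)
  then show ?case using emb_mult[of "f a" "\<Prod>a\<in>A. f a"] sfprod[OF sf, of A f] by simp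
qed (simp_all add: emb_1)

lemma emb_poly: "(\<forall>i. coeff p i \<in> \<int>) \<Longrightarrow> x \<in> L \<Longrightarrow> poly p x \<in> L \<and> \<sigma> (poly p x) = poly p (\<sigma> x)"
proof (induction p)
  case 0 then show ?case by (simp add: emb_0 sf0[OF sf])
next
  case (pCons a p)
  have a: "a \<in> \<int>" using pCons.prems(1) by (metis coeff_pCons_0)
  have p: "\<forall>i. coeff p i \<in> \<int>" using pCons.prems(1) by (metis coeff_pCons_Suc)
  obtain k where k: "a = of_int k" using a by (meson Ints_cases)
  have aL: "a \<in> L" using k sfint[OF sf] by simp
  from pCons.IH[OF p pCons.prems(2)] have IH: "poly p x \<in> L" "\<sigma> (poly p x) = poly p (\<sigma> x)" by auto
  have "poly (pCons a p) x \<in> L" using aL IH sfadd[OF sf] sfmult[OF sf] pCons.prems(2) by simp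
  moreover have "\<sigma> (poly (pCons a p) x) = poly (pCons a p) (\<sigma> x)"
    using emb_add[OF aL sfmult[OF sf pCons.prems(2) IH(1)]] emb_mult[OF pCons.prems(2) IH(1)] IH(2)
      emb_int k by simp
  ultimately show ?case by blast
qed

lemma emb_alg_int: "x \<in> L \<Longrightarrow> algebraic_int x \<Longrightarrow> algebraic_int (\<sigma> x)"
proof -
  assume x: "x \<in> L" and "algebraic_int x"
  then obtain p where p: "lead_coeff p = 1" "\<forall>i. coeff p i \<in> \<int>" "poly p x = 0"
    by (auto elim: algebraic_int.cases)
  have "poly p (\<sigma> x) = 0" using emb_poly[OF p(2) x] p(3) emb_0 by simp
  then show ?thesis using p by (intro algebraic_int.intros) auto
qed

end

lemma core_quad:
  fixes u s p :: real
  assumes u: "u > 1" and s: "s \<in> \<int>" and p: "p = 1 \<or> p = -1" and eq: "u^2 - s * u + p = 0"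
  shows "u \<ge> (1 + sqrt 5) / 2 \<and> (u < 1 + sqrt 2 \<longrightarrow> s^2 - 4 * p = 5)"
proof -
  define ph where "ph = (1 + sqrt 5) / 2"
  define t where "t = 1 + sqrt 2"
  define r where "r = (3 + sqrt 5) / 2"
  have s5: "sqrt 5 * sqrt 5 = (5::real)" by simp
  have s2: "sqrt 2 * sqrt 2 = (2::real)" by simp
  have ph2: "ph^2 = ph + 1" unfolding ph_def power2_eq_square using s5 by (simp add: algebra_simps add_divide_distrib)
  have t2: "t^2 = 2 * t + 1" unfolding t_def power2_eq_square using s2 by (simp add: algebra_simps)
  have r2: "r^2 = 3 * r - 1" unfolding r_def power2_eq_square using s5 by (simp add: algebra_simps add_divide_distrib)
  have a5: "2 \<le> sqrt (5::real)" by (rule real_le_rsqrt) simp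
  have b5: "sqrt (5::real) \<le> 3" by (rule real_le_lsqrt) simp_all
  have a2: "1 \<le> sqrt (2::real)" by (rule real_le_rsqrt) simp
  have b2: "sqrt (2::real) \<le> 1.5" by (rule real_le_lsqrt) (simp_all add: power2_eq_square)
  have pht: "ph \<le> t" unfolding ph_def t_def using b5 a2 by (simp add: field_simps; linarith)
  have rt: "t \<le> r" unfolding r_def t_def using a5 b2 by (simp add: field_simps; linarith)
  have L1: "u \<ge> ph" if "u^2 - u - 1 \<ge> 0"
  proof -
    have "(u - ph) * (u + ph - 1) = u^2 - u - (ph^2 - ph)" by (simp add: algebra_simps power2_eq_square)
    also have "\<dots> = u^2 - u - 1" using ph2 by simp
    finally have "(u - ph) * (u + ph - 1) \<ge> 0" using that by simp
    moreover have "u + ph - 1 > 0" using u a5 unfolding ph_def by (simp add: field_simps; linarith)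
    ultimately show ?thesis by (simp add: zero_le_mult_iff)
  qed
  have L2: "u \<ge> t" if "u^2 - 2 * u - 1 \<ge> 0"
  proof -
    have "(u - t) * (u + t - 2) = u^2 - 2 * u - (t^2 - 2 * t)" by (simp add: algebra_simps power2_eq_square)
    also have "\<dots> = u^2 - 2 * u - 1" using t2 by simp
    finally have "(u - t) * (u + t - 2) \<ge> 0" using that by simp
    moreover have "u + t - 2 > 0" using u a2 unfolding t_def by (simp add: field_simps; linarith)
    ultimately show ?thesis by (simp add: zero_le_mult_iff)
  qed
  have L3: "u \<ge> t" if "u^2 - 3 * u + 1 \<ge> 0"
  proof -
    have "(u - r) * (u + r - 3) = u^2 - 3 * u - (r^2 - 3 * r)" by (simp add: algebra_simps power2_eq_square)
    also have "\<dots> = u^2 - 3 * u + 1" using r2 by simp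
    finally have "(u - r) * (u + r - 3) \<ge> 0" using that by simp
    moreover have "u + r - 3 > 0" using u a5 unfolding r_def by (simp add: field_simps; linarith)
    ultimately have "u \<ge> r" by (simp add: zero_le_mult_iff)
    then show ?thesis using rt by simp
  qed
  obtain k where k: "s = of_int k" using s by (meson Ints_cases)
  show ?thesis
  proof (cases "p = 1")
    case True
    have "s * u = u^2 + 1" using eq True by simp
    moreover have "u^2 + 1 > 2 * u"
    proof -
      have "(u - 1)^2 > 0" using u by simp
      then show ?thesis by (simp add: power2_eq_square algebra_simps)
    qed
    ultimately have "s * u > 2 * u" by simp
    then have "s > 2" using u by (intro mult_right_less_imp_less[of 2 u s]) auto
    then have "k \<ge> 3" using k by simp
    then have "s \<ge> 3" using k by simp
    then have "s * u \<ge> 3 * u" using u by (simp add: mult_right_mono)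
    then have "u^2 - 3 * u + 1 \<ge> 0" using \<open>s * u = u^2 + 1\<close> by simp
    then have "u \<ge> t" by (rule L3)
    then show ?thesis using pht unfolding ph_def t_def by simp
  next
    case False
    then have pm: "p = -1" using p by simp
    have su: "s * u = u^2 - 1" using eq pm by simp
    moreover have "u^2 - 1 > 0"
    proof -
      have "u * u > 1 * 1" using u by (intro mult_strict_mono) auto
      then show ?thesis by (simp add: power2_eq_square)
    qed
    ultimately have "s * u > 0" by simp
    then have "s > 0" using u by (simp add: zero_less_mult_iff)
    then have k1: "k \<ge> 1" using k by simp
    then have "s \<ge> 1" using k by simp
    then have "s * u \<ge> u" using u by (simp add: mult_right_mono)
    then have "u^2 - u - 1 \<ge> 0" using su by simp
    then have g1: "u \<ge> ph" by (rule L1)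
    have "u < 1 + sqrt 2 \<longrightarrow> s^2 - 4 * p = 5"
    proof
      assume ut: "u < 1 + sqrt 2"
      have "k = 1"
      proof (rule ccontr)
        assume "k \<noteq> 1"
        then have "s \<ge> 2" using k k1 by simp
        then have "s * u \<ge> 2 * u" using u by (simp add: mult_right_mono)
        then have "u^2 - 2 * u - 1 \<ge> 0" using su by simp
        then have "u \<ge> t" by (rule L2)
        then show False using ut unfolding t_def by linarith
      qed
      then show "s^2 - 4 * p = 5" using k pm by simp
    qed
    then show ?thesis using g1 unfolding ph_def by blast
  qed
qed


lemma quad_gt1:
  fixes u s p :: real
  assumes u: "\<bar>u\<bar> > 1" and s: "s \<in> \<int>" and p: "p = 1 \<or> p = -1" and eq: "u^2 - s * u + p = 0"
  shows "\<bar>u\<bar> \<ge> (1 + sqrt 5) / 2 \<and> (\<bar>u\<bar> < 1 + sqrt 2 \<longrightarrow> s^2 - 4 * p = 5)"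
proof (cases "u > 0")
  case True
  then show ?thesis using core_quad[OF _ s p eq] u by simp
next
  case False
  have "(-u)^2 - (-s) * (-u) + p = 0" using eq by simp
  moreover have "-s \<in> \<int>" using s by simp
  ultimately show ?thesis using core_quad[of "-u" "-s" p] u p False by simp
qed

lemma quad_lt1:
  fixes u s p :: real
  assumes u: "\<bar>u\<bar> < 1" "u \<noteq> 0" and s: "s \<in> \<int>" and p: "p = 1 \<or> p = -1" and eq: "u^2 - s * u + p = 0"
  shows "1 / \<bar>u\<bar> \<ge> (1 + sqrt 5) / 2"
proof -
  define v where "v = p / u"
  have pp: "p * p = 1" using p by auto
  have "v^2 - s * v + p = (p / u^2) * (u^2 - s * u + p)"
    unfolding v_def using u(2) pp by (simp add: field_simps power2_eq_square)
  then have ev: "v^2 - s * v + p = 0" using eq by simp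
  have av: "\<bar>v\<bar> = 1 / \<bar>u\<bar>" unfolding v_def using p by (auto simp: abs_divide)
  have "\<bar>v\<bar> > 1" unfolding av using u by (simp add: field_simps)
  then show ?thesis using quad_gt1[OF _ s p ev] av by simp
qed

lemma quad_ln:
  fixes u s p :: real
  assumes u: "u \<noteq> 0" and s: "s \<in> \<int>" and p: "p = 1 \<or> p = -1" and eq: "u^2 - s * u + p = 0"
  shows "ln \<bar>u\<bar> = 0 \<or> \<bar>ln \<bar>u\<bar>\<bar> \<ge> ln ((1 + sqrt 5) / 2)"
proof -
  have ph0: "(1 + sqrt 5) / 2 > (0::real)" by (simp add: add_pos_nonneg)
  consider "\<bar>u\<bar> = 1" | "\<bar>u\<bar> > 1" | "\<bar>u\<bar> < 1" by linarith
  then show ?thesis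
  proof cases
    case 1 then show ?thesis by simp
  next
    case 2
    then have "\<bar>u\<bar> \<ge> (1 + sqrt 5) / 2" using quad_gt1[OF _ s p eq] by blast
    then have "ln \<bar>u\<bar> \<ge> ln ((1 + sqrt 5) / 2)" using ph0 by simp
    moreover have "ln \<bar>u\<bar> > 0" using 2 by simp
    ultimately show ?thesis by simp
  next
    case 3
    then have "1 / \<bar>u\<bar> \<ge> (1 + sqrt 5) / 2" using quad_lt1[OF _ u s p eq] by blast
    then have "ln (1 / \<bar>u\<bar>) \<ge> ln ((1 + sqrt 5) / 2)"
      using ln_le_cancel_iff[of "(1 + sqrt 5)/2" "1 / \<bar>u\<bar>"] ph0 u by simp
    moreover have "ln (1 / \<bar>u\<bar>) = - ln \<bar>u\<bar>" using u by (simp add: ln_div)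
    moreover have "ln \<bar>u\<bar> < 0" using 3 u by simp
    ultimately show ?thesis by simp
  qed
qed

lemma discrete_cyclic:
  fixes \<Lambda> :: "real set"
  assumes z: "0 \<in> \<Lambda>" and d: "\<forall>x\<in>\<Lambda>. \<forall>y\<in>\<Lambda>. x - y \<in> \<Lambda>" and dp: "\<delta> > 0"
    and disc: "\<forall>x\<in>\<Lambda>. x \<noteq> 0 \<longrightarrow> \<bar>x\<bar> \<ge> \<delta>"
  shows "\<exists>c\<in>\<Lambda>. c \<ge> 0 \<and> (\<forall>x\<in>\<Lambda>. \<exists>k::int. x = of_int k * c)"
proof (cases "\<Lambda> = {0}")
  case True then show ?thesis by (intro bexI[of _ 0]) auto
next
  case False
  then obtain x0 where x0: "x0 \<in> \<Lambda>" "x0 \<noteq> 0" using z by blast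
  have neg: "- x \<in> \<Lambda>" if "x \<in> \<Lambda>" for x using d z that by (metis diff_0)
  have add: "x + y \<in> \<Lambda>" if "x \<in> \<Lambda>" "y \<in> \<Lambda>" for x y using d neg[OF that(2)] that(1)
    by (metis diff_minus_eq_add)
  define P where "P = {x\<in>\<Lambda>. x > 0}"
  have Pne: "P \<noteq> {}"
  proof (cases "x0 > 0")
    case True then have "x0 \<in> P" unfolding P_def using x0 by simp
    then show ?thesis by blast
  next
    case False then have "-x0 \<in> P" unfolding P_def using x0 neg[OF x0(1)] by simp
    then show ?thesis by blast
  qed
  have Pge: "\<forall>x\<in>P. x \<ge> \<delta>" unfolding P_def using disc by force
  have bdd: "bdd_below P" using Pge by (auto simp: bdd_below_def)
  define c where "c = Inf P"
  have cge: "c \<ge> \<delta>" unfolding c_def using Pne Pge by (intro cInf_greatest) auto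
  have cP: "c \<in> P"
  proof (rule ccontr)
    assume nc: "c \<notin> P"
    have "\<exists>x\<in>P. x < c + \<delta>" unfolding c_def using Pne bdd dp by (subst cInf_less_iff[symmetric]) (auto simp: c_def[symmetric])
    then obtain x where x: "x \<in> P" "x < c + \<delta>" by blast
    have "x \<ge> c" unfolding c_def using x(1) bdd by (intro cInf_lower) auto
    then have xc: "x > c" using nc x(1) by (cases "x = c") auto
    have "\<exists>y\<in>P. y < x" using xc Pne bdd unfolding c_def by (subst cInf_less_iff[symmetric]) auto
    then obtain y where y: "y \<in> P" "y < x" by blast
    have "y \<ge> c" unfolding c_def using y(1) bdd by (intro cInf_lower) auto
    then have yc: "y > c" using nc y(1) by (cases "y = c") auto
    have "x - y \<in> \<Lambda>" using d x(1) y(1) unfolding P_def by blast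
    moreover have "x - y \<noteq> 0" "\<bar>x - y\<bar> < \<delta>" using y(2) x(2) yc by auto
    ultimately show False using disc by force
  qed
  then have cL: "c \<in> \<Lambda>" and cpos: "c > 0" unfolding P_def by auto
  have natm: "of_nat k * c \<in> \<Lambda>" for k
  proof (induction k)
    case (Suc k)
    have "of_nat (Suc k) * c = of_nat k * c + c" by (simp add: distrib_right)
    then show ?case using add[OF Suc cL] by simp
  qed (simp add: z)
  have intm: "of_int k * c \<in> \<Lambda>" for k :: int
  proof (cases "k \<ge> 0")
    case True then show ?thesis using natm[of "nat k"] by simp
  next
    case False then show ?thesis using neg[OF natm[of "nat (-k)"]] by simp
  qed
  have "\<forall>x\<in>\<Lambda>. \<exists>k::int. x = of_int k * c"
  proof
    fix x assume x: "x \<in> \<Lambda>"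
    define k where "k = \<lfloor>x / c\<rfloor>"
    define r where "r = x - of_int k * c"
    have rL: "r \<in> \<Lambda>" unfolding r_def using d x intm by blast
    have "of_int k \<le> x / c" "x / c < of_int k + 1" unfolding k_def by linarith+
    then have r0: "r \<ge> 0" "r < c" unfolding r_def using cpos by (auto simp: field_simps)
    have "r = 0"
    proof (rule ccontr)
      assume "r \<noteq> 0"
      then have "r \<in> P" unfolding P_def using rL r0 by auto
      then have "c \<le> r" unfolding c_def using bdd by (intro cInf_lower) auto
      then show False using r0 by simp
    qed
    then show "\<exists>k::int. x = of_int k * c" unfolding r_def by (intro exI[of _ k]) simp
  qed
  then show ?thesis using cL cpos by (intro bexI[of _ c]) auto
qed


definition sg :: "int \<Rightarrow> real" where "sg a = (if a = 0 then 1 else -1)"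

locale mq =
  fixes L :: "complex set" and n :: nat and \<phi> :: "(complex \<Rightarrow> complex) \<Rightarrow> (nat \<Rightarrow> int)"
  assumes nf: "number_field L" and tr: "totally_real L" and gal: "galois_over_Q L"
    and iso: "\<phi> \<in> iso (Gal L) (Z2_power n)"
begin

abbreviation G where "G \<equiv> embeddings L"

lemma sf: "subfield_C L" using nf unfolding number_field_def by blast

lemma carrierG: "carrier (Gal L) = G"
  using gal unfolding Gal_def galois_over_Q_def by auto

lemma G_maps: "\<sigma> \<in> G \<Longrightarrow> x \<in> L \<Longrightarrow> \<sigma> x \<in> L"
  using gal unfolding galois_over_Q_def by blast

lemma G_real: "\<sigma> \<in> G \<Longrightarrow> x \<in> L \<Longrightarrow> \<sigma> x \<in> \<real>"
  using tr unfolding totally_real_def by blast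

lemma id_G: "restrict id L \<in> G"
  unfolding embeddings_def using sf1[OF sf] sfadd[OF sf] sfmult[OF sf] by auto

lemma L_real: "x \<in> L \<Longrightarrow> x \<in> \<real>"
  using G_real[OF id_G] by simp

lemma compose_app: "x \<in> L \<Longrightarrow> compose L \<sigma> \<tau> x = \<sigma> (\<tau> x)"
  by (simp add: compose_def)

lemma compose_G: assumes "\<sigma> \<in> G" "\<tau> \<in> G" shows "compose L \<sigma> \<tau> \<in> G"
  unfolding embeddings_def
proof (intro CollectI conjI ballI)
  show "compose L \<sigma> \<tau> \<in> extensional L" by simp
  show "compose L \<sigma> \<tau> 1 = 1" using sf1[OF sf] emb_1[OF sf assms(1)] emb_1[OF sf assms(2)]
    by (simp add: compose_app)
  fix x y assume x: "x \<in> L" and y: "y \<in> L"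
  show "compose L \<sigma> \<tau> (x + y) = compose L \<sigma> \<tau> x + compose L \<sigma> \<tau> y"
    using x y sfadd[OF sf x y] emb_add[OF sf assms(2) x y] emb_add[OF sf assms(1)] G_maps assms
    by (simp add: compose_app)
  show "compose L \<sigma> \<tau> (x * y) = compose L \<sigma> \<tau> x * compose L \<sigma> \<tau> y"
    using x y sfmult[OF sf x y] emb_mult[OF sf assms(2) x y] emb_mult[OF sf assms(1)] G_maps assms
    by (simp add: compose_app)
qed

lemma G_ext: "\<sigma> \<in> G \<Longrightarrow> \<sigma> \<in> extensional L"
  unfolding embeddings_def by blast

lemma phi_bij: "bij_betw \<phi> G (PiE {..<n} (\<lambda>_. {0..<2}))"
  using iso unfolding iso_def Z2_power_def carrierG[symmetric]
  by (simp add: carrier_integer_mod_group)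

lemma finite_G: "finite G"
proof -
  have "finite (PiE {..<n} (\<lambda>_. {0..<(2::int)}))" by (simp add: finite_PiE)
  then show ?thesis using phi_bij bij_betw_finite by blast
qed

lemma phi_mult: assumes "\<sigma> \<in> G" "\<tau> \<in> G"
  shows "\<phi> (compose L \<sigma> \<tau>) = (\<lambda>i\<in>{..<n}. (\<phi> \<sigma> i + \<phi> \<tau> i) mod 2)"
proof -
  have h: "\<phi> \<in> hom (Gal L) (Z2_power n)" using iso unfolding iso_def by blast
  have "\<phi> (\<sigma> \<otimes>\<^bsub>Gal L\<^esub> \<tau>) = \<phi> \<sigma> \<otimes>\<^bsub>Z2_power n\<^esub> \<phi> \<tau>"
    using h assms carrierG by (auto simp: hom_def)
  then show ?thesis by (simp add: Gal_def Z2_power_def integer_mod_group_def)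
qed

lemma phi_val: assumes "\<sigma> \<in> G" "i < n" shows "\<phi> \<sigma> i = 0 \<or> \<phi> \<sigma> i = 1"
proof -
  have "\<phi> \<sigma> \<in> PiE {..<n} (\<lambda>_. {0..<2})" using phi_bij assms(1) unfolding bij_betw_def by blast
  then have "\<phi> \<sigma> i \<in> {0..<2}" using assms(2) by (auto simp: PiE_def Pi_def)
  then show ?thesis by auto
qed

lemma compose_self: assumes "\<sigma> \<in> G" shows "compose L \<sigma> \<sigma> = restrict id L"
proof -
  have e: "compose L (restrict id L) (restrict id L) = restrict id L"
    by (rule extensionalityI[of _ L]) (auto simp: compose_app)
  have "\<phi> (compose L \<sigma> \<sigma>) = \<phi> (compose L (restrict id L) (restrict id L))"
    using phi_mult[OF assms assms] phi_mult[OF id_G id_G] by (simp add: cong: restrict_cong)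
  moreover have "compose L \<sigma> \<sigma> \<in> G" "compose L (restrict id L) (restrict id L) \<in> G"
    using compose_G assms id_G by auto
  ultimately have "compose L \<sigma> \<sigma> = compose L (restrict id L) (restrict id L)"
    using phi_bij unfolding bij_betw_def by (meson inj_onD)
  then show ?thesis using e by simp
qed

lemma compose_inv: assumes "\<sigma> \<in> G" "\<tau> \<in> G" shows "compose L \<sigma> (compose L \<sigma> \<tau>) = \<tau>"
proof (rule extensionalityI[of _ L])
  show "compose L \<sigma> (compose L \<sigma> \<tau>) \<in> extensional L" by simp
  show "\<tau> \<in> extensional L" using G_ext assms(2) .
  fix x assume x: "x \<in> L"
  have "compose L \<sigma> (compose L \<sigma> \<tau>) x = compose L \<sigma> \<sigma> (\<tau> x)"
    using x G_maps[OF assms(2) x] by (simp add: compose_app)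
  also have "\<dots> = \<tau> x" using compose_self[OF assms(1)] G_maps[OF assms(2) x] by simp
  finally show "compose L \<sigma> (compose L \<sigma> \<tau>) x = \<tau> x" .
qed

definition chi :: "nat set \<Rightarrow> (complex \<Rightarrow> complex) \<Rightarrow> real" where
  "chi S \<sigma> = (\<Prod>i\<in>S. sg (\<phi> \<sigma> i))"

definition ischar :: "((complex \<Rightarrow> complex) \<Rightarrow> real) \<Rightarrow> bool" where
  "ischar ch \<longleftrightarrow> (\<forall>\<sigma>\<in>G. ch \<sigma> = 1 \<or> ch \<sigma> = -1) \<and> (\<forall>\<sigma>\<in>G. \<forall>\<tau>\<in>G. ch (compose L \<sigma> \<tau>) = ch \<sigma> * ch \<tau>)"

lemma prod_pm: "(\<And>i. i \<in> S \<Longrightarrow> f i = 1 \<or> f i = -1) \<Longrightarrow> (\<Prod>i\<in>S. f i) = 1 \<or> (\<Prod>i\<in>S. f i) = (-1::real)"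
proof (induction S rule: infinite_finite_induct)
  case (insert x F)
  then have "f x = 1 \<or> f x = -1" "prod f F = 1 \<or> prod f F = -1" by auto
  then show ?case using insert(1,2) by auto
qed auto

lemma chi_ischar: assumes "S \<subseteq> {..<n}" shows "ischar (chi S)"
  unfolding ischar_def
proof (intro conjI ballI)
  fix \<sigma> assume "\<sigma> \<in> G"
  show "chi S \<sigma> = 1 \<or> chi S \<sigma> = -1" unfolding chi_def by (rule prod_pm) (simp add: sg_def)
next
  fix \<sigma> \<tau> assume st: "\<sigma> \<in> G" "\<tau> \<in> G"
  have "sg (\<phi> (compose L \<sigma> \<tau>) i) = sg (\<phi> \<sigma> i) * sg (\<phi> \<tau> i)" if "i \<in> S" for i
  proof -
    have i: "i < n" using that assms by auto
    have "\<phi> (compose L \<sigma> \<tau>) i = (\<phi> \<sigma> i + \<phi> \<tau> i) mod 2" using phi_mult[OF st] i by simp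
    then show ?thesis using phi_val[OF st(1) i] phi_val[OF st(2) i] by (auto simp: sg_def)
  qed
  then show "chi S (compose L \<sigma> \<tau>) = chi S \<sigma> * chi S \<tau>"
    unfolding chi_def by (simp add: prod.distrib[symmetric])
qed

end

context mq
begin

lemma units_props: "\<epsilon> \<in> units L \<Longrightarrow> \<epsilon> \<in> L \<and> \<epsilon> \<noteq> 0 \<and> algebraic_int \<epsilon> \<and> algebraic_int (inverse \<epsilon>)"
  unfolding units_def by blast

lemma units_inv: "\<epsilon> \<in> units L \<Longrightarrow> inverse \<epsilon> \<in> units L"
  unfolding units_def using sfinv[OF sf] by auto

lemma units_mult: "a \<in> units L \<Longrightarrow> b \<in> units L \<Longrightarrow> a * b \<in> units L"
  unfolding units_def using sfmult[OF sf] alg_int_mult by (auto simp: inverse_mult_distrib)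

lemma units_1: "1 \<in> units L"
  unfolding units_def using sf1[OF sf] alg_int_1 by simp

definition Ap :: "((complex \<Rightarrow> complex) \<Rightarrow> real) \<Rightarrow> real \<Rightarrow> complex \<Rightarrow> complex" where
  "Ap ch c \<epsilon> = (\<Prod>\<sigma>\<in>{\<sigma>\<in>G. ch \<sigma> = c}. \<sigma> \<epsilon>)"

lemma shift_image:
  assumes ch: "ischar ch" and h: "h \<in> G" and c: "c = 1 \<or> c = -1"
  shows "compose L h ` {\<sigma>\<in>G. ch \<sigma> = c} = {\<sigma>\<in>G. ch \<sigma> = ch h * c} \<and> inj_on (compose L h) {\<sigma>\<in>G. ch \<sigma> = c}"
proof -
  have chm: "ch (compose L h \<sigma>) = ch h * ch \<sigma>" if "\<sigma> \<in> G" for \<sigma>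
  proof -
    have "\<forall>\<sigma>\<in>G. \<forall>\<tau>\<in>G. ch (compose L \<sigma> \<tau>) = ch \<sigma> * ch \<tau>" using ch unfolding ischar_def by (rule conjunct2)
    then show ?thesis using h that by blast
  qed
  have "ch h = 1 \<or> ch h = -1" using ch h unfolding ischar_def by blast
  then have chh: "ch h * ch h = 1" by auto
  have "compose L h ` {\<sigma>\<in>G. ch \<sigma> = c} \<subseteq> {\<sigma>\<in>G. ch \<sigma> = ch h * c}"
  proof
    fix \<tau> assume "\<tau> \<in> compose L h ` {\<sigma>\<in>G. ch \<sigma> = c}"
    then obtain \<sigma> where s: "\<sigma> \<in> G" "ch \<sigma> = c" "\<tau> = compose L h \<sigma>" by blast
    have "\<tau> \<in> G" using s compose_G[OF h s(1)] by simp
    moreover have "ch \<tau> = ch h * c" using s chm[OF s(1)] by simp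
    ultimately show "\<tau> \<in> {\<sigma>\<in>G. ch \<sigma> = ch h * c}" by simp
  qed
  moreover have "{\<sigma>\<in>G. ch \<sigma> = ch h * c} \<subseteq> compose L h ` {\<sigma>\<in>G. ch \<sigma> = c}"
  proof
    fix \<tau> assume t: "\<tau> \<in> {\<sigma>\<in>G. ch \<sigma> = ch h * c}"
    then have tG: "\<tau> \<in> G" and tc: "ch \<tau> = ch h * c" by auto
    have g: "compose L h \<tau> \<in> G" using compose_G[OF h tG] .
    have "ch (compose L h \<tau>) = ch h * (ch h * c)" using chm[OF tG] tc by simp
    also have "\<dots> = c" using chh by (simp add: mult.assoc[symmetric])
    finally have c2: "ch (compose L h \<tau>) = c" .
    have "\<tau> = compose L h (compose L h \<tau>)" using compose_inv[OF h tG] by simp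
    then show "\<tau> \<in> compose L h ` {\<sigma>\<in>G. ch \<sigma> = c}" using g c2 by blast
  qed
  moreover have "inj_on (compose L h) {\<sigma>\<in>G. ch \<sigma> = c}"
  proof (rule inj_onI)
    fix x y assume "x \<in> {\<sigma>\<in>G. ch \<sigma> = c}" "y \<in> {\<sigma>\<in>G. ch \<sigma> = c}" "compose L h x = compose L h y"
    then have xG: "x \<in> G" and yG: "y \<in> G" and eq: "compose L h x = compose L h y" by auto
    have "x = compose L h (compose L h x)" using compose_inv[OF h xG] by simp
    also have "\<dots> = compose L h (compose L h y)" using eq by simp
    also have "\<dots> = y" using compose_inv[OF h yG] by simp
    finally show "x = y" .
  qed
  ultimately show ?thesis by (intro conjI equalityI)
qed


lemma Ap_L: "\<epsilon> \<in> L \<Longrightarrow> Ap ch c \<epsilon> \<in> L"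
  unfolding Ap_def by (rule sfprod[OF sf]) (auto intro: G_maps)

lemma Ap_shift:
  assumes ch: "ischar ch" and h: "h \<in> G" and e: "\<epsilon> \<in> L" and c: "c = 1 \<or> c = -1"
  shows "h (Ap ch c \<epsilon>) = Ap ch (ch h * c) \<epsilon>"
proof -
  note si = shift_image[OF ch h c]
  have "h (Ap ch c \<epsilon>) = (\<Prod>\<sigma>\<in>{\<sigma>\<in>G. ch \<sigma> = c}. h (\<sigma> \<epsilon>))"
    unfolding Ap_def by (rule emb_prod[OF sf h]) (auto intro: G_maps e)
  also have "\<dots> = (\<Prod>\<sigma>\<in>{\<sigma>\<in>G. ch \<sigma> = c}. compose L h \<sigma> \<epsilon>)"
    using e by (simp add: compose_app)
  also have "\<dots> = (\<Prod>\<tau>\<in>compose L h ` {\<sigma>\<in>G. ch \<sigma> = c}. \<tau> \<epsilon>)"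
  proof -
    have inj: "inj_on (compose L h) {\<sigma>\<in>G. ch \<sigma> = c}" using si by blast
    show ?thesis using prod.reindex[OF inj, of "\<lambda>\<tau>. \<tau> \<epsilon>"] by simp
  qed
  also have "\<dots> = Ap ch (ch h * c) \<epsilon>" unfolding Ap_def using si by simp
  finally show ?thesis .
qed

lemma Ap_alg: "\<epsilon> \<in> units L \<Longrightarrow> algebraic_int (Ap ch c \<epsilon>)"
  unfolding Ap_def using units_props emb_alg_int[OF sf] finite_G
  by (intro alg_int_prod) auto

lemma Ap_nz: "\<epsilon> \<in> units L \<Longrightarrow> Ap ch c \<epsilon> \<noteq> 0"
  unfolding Ap_def using units_props emb_nz[OF sf] finite_G by auto

lemma Ap_inv: "\<epsilon> \<in> units L \<Longrightarrow> Ap ch c (inverse \<epsilon>) = inverse (Ap ch c \<epsilon>)"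
proof -
  assume e: "\<epsilon> \<in> units L"
  have "Ap ch c (inverse \<epsilon>) = (\<Prod>\<sigma>\<in>{\<sigma>\<in>G. ch \<sigma> = c}. (inverse \<circ> (\<lambda>\<sigma>. \<sigma> \<epsilon>)) \<sigma>)"
    unfolding Ap_def using emb_inverse[OF sf] units_props[OF e] by (intro prod.cong) auto
  also have "\<dots> = inverse (Ap ch c \<epsilon>)" unfolding Ap_def by (rule prod_inversef)
  finally show ?thesis .
qed


lemma fixed_all:
  assumes ch: "ischar ch" and e: "\<epsilon> \<in> units L"
  shows "\<forall>h\<in>G. h (Ap ch 1 \<epsilon> + Ap ch (-1) \<epsilon>) = Ap ch 1 \<epsilon> + Ap ch (-1) \<epsilon>"
    and "\<forall>h\<in>G. h (Ap ch 1 \<epsilon> * Ap ch (-1) \<epsilon>) = Ap ch 1 \<epsilon> * Ap ch (-1) \<epsilon>"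
proof -
  have eL: "\<epsilon> \<in> L" using units_props[OF e] by blast
  have sh: "h (Ap ch 1 \<epsilon>) = Ap ch (ch h) \<epsilon>" "h (Ap ch (-1) \<epsilon>) = Ap ch (- ch h) \<epsilon>" if "h \<in> G" for h
    using Ap_shift[OF ch that eL, of 1] Ap_shift[OF ch that eL, of "-1"] by auto
  have pm: "ch h = 1 \<or> ch h = -1" if "h \<in> G" for h using ch that unfolding ischar_def by blast
  show "\<forall>h\<in>G. h (Ap ch 1 \<epsilon> + Ap ch (-1) \<epsilon>) = Ap ch 1 \<epsilon> + Ap ch (-1) \<epsilon>"
  proof
    fix h assume h: "h \<in> G"
    have "h (Ap ch 1 \<epsilon> + Ap ch (-1) \<epsilon>) = h (Ap ch 1 \<epsilon>) + h (Ap ch (-1) \<epsilon>)"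
      using emb_add[OF sf h Ap_L[OF eL] Ap_L[OF eL]] .
    then show "h (Ap ch 1 \<epsilon> + Ap ch (-1) \<epsilon>) = Ap ch 1 \<epsilon> + Ap ch (-1) \<epsilon>"
      using sh[OF h] pm[OF h] by auto
  qed
  show "\<forall>h\<in>G. h (Ap ch 1 \<epsilon> * Ap ch (-1) \<epsilon>) = Ap ch 1 \<epsilon> * Ap ch (-1) \<epsilon>"
  proof
    fix h assume h: "h \<in> G"
    have "h (Ap ch 1 \<epsilon> * Ap ch (-1) \<epsilon>) = h (Ap ch 1 \<epsilon>) * h (Ap ch (-1) \<epsilon>)"
      using emb_mult[OF sf h Ap_L[OF eL] Ap_L[OF eL]] .
    then show "h (Ap ch 1 \<epsilon> * Ap ch (-1) \<epsilon>) = Ap ch 1 \<epsilon> * Ap ch (-1) \<epsilon>"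
      using sh[OF h] pm[OF h] by auto
  qed
qed

lemma sP_int: assumes ch: "ischar ch" and e: "\<epsilon> \<in> units L" shows "Ap ch 1 \<epsilon> + Ap ch (-1) \<epsilon> \<in> \<int>"
proof -
  have eL: "\<epsilon> \<in> L" using units_props[OF e] by blast
  show ?thesis
    by (rule fixed_int[OF nf sfadd[OF sf Ap_L[OF eL] Ap_L[OF eL]] fixed_all(1)[OF ch e]
          alg_int_add[OF Ap_alg[OF e] Ap_alg[OF e]]])
qed

lemma NP_int: assumes ch: "ischar ch" and e: "\<epsilon> \<in> units L" shows "Ap ch 1 \<epsilon> * Ap ch (-1) \<epsilon> \<in> \<int>"
proof -
  have eL: "\<epsilon> \<in> L" using units_props[OF e] by blast
  show ?thesis
    by (rule fixed_int[OF nf sfmult[OF sf Ap_L[OF eL] Ap_L[OF eL]] fixed_all(2)[OF ch e]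
          alg_int_mult[OF Ap_alg[OF e] Ap_alg[OF e]]])
qed

lemma NP_pm:
  assumes ch: "ischar ch" and e: "\<epsilon> \<in> units L"
  shows "Ap ch 1 \<epsilon> * Ap ch (-1) \<epsilon> = 1 \<or> Ap ch 1 \<epsilon> * Ap ch (-1) \<epsilon> = -1"
proof -
  define N where "N = Ap ch 1 \<epsilon> * Ap ch (-1) \<epsilon>"
  have "N \<in> \<int>" unfolding N_def using NP_int[OF ch e] .
  moreover have "inverse N \<in> \<int>"
    using NP_int[OF ch units_inv[OF e]] Ap_inv[OF e] unfolding N_def by (simp add: inverse_mult_distrib)
  moreover have "N \<noteq> 0" unfolding N_def using Ap_nz[OF e] by simp
  ultimately obtain a b where ab: "N = of_int a" "inverse N = of_int b" by (meson Ints_cases)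
  then have "of_int (a * b) = (1::complex)" using \<open>N \<noteq> 0\<close> by (metis of_int_mult right_inverse)
  then have "a * b = 1" by (metis of_int_eq_1_iff)
  then have "a = 1 \<or> a = -1" using zmult_eq_1_iff[of a b] by blast
  then show ?thesis using ab(1) unfolding N_def by auto
qed

definition A :: "((complex \<Rightarrow> complex) \<Rightarrow> real) \<Rightarrow> complex \<Rightarrow> real" where
  "A ch \<epsilon> = (\<Sum>\<sigma>\<in>G. ch \<sigma> * ln (cmod (\<sigma> \<epsilon>)))"

lemma ln_Ap: "\<epsilon> \<in> units L \<Longrightarrow> ln (cmod (Ap ch c \<epsilon>)) = (\<Sum>\<sigma>\<in>{\<sigma>\<in>G. ch \<sigma> = c}. ln (cmod (\<sigma> \<epsilon>)))"
proof -
  assume e: "\<epsilon> \<in> units L"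
  have "cmod (Ap ch c \<epsilon>) = (\<Prod>\<sigma>\<in>{\<sigma>\<in>G. ch \<sigma> = c}. cmod (\<sigma> \<epsilon>))"
    unfolding Ap_def by (simp add: prod_norm)
  moreover have "\<sigma> \<epsilon> \<noteq> 0" if "\<sigma> \<in> G" for \<sigma> using emb_nz[OF sf that] units_props[OF e] by blast
  moreover have "finite {\<sigma>\<in>G. ch \<sigma> = c}" using finite_G by simp
  ultimately show ?thesis using ln_prod[of "{\<sigma>\<in>G. ch \<sigma> = c}" "\<lambda>\<sigma>. cmod (\<sigma> \<epsilon>)"] by simp
qed

lemma A_split:
  assumes ch: "ischar ch" and e: "\<epsilon> \<in> units L"
  shows "A ch \<epsilon> = ln (cmod (Ap ch 1 \<epsilon>)) - ln (cmod (Ap ch (-1) \<epsilon>))"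
proof -
  have GU: "G = {\<sigma>\<in>G. ch \<sigma> = 1} \<union> {\<sigma>\<in>G. ch \<sigma> = -1}" using ch unfolding ischar_def by auto
  have "A ch \<epsilon> = (\<Sum>\<sigma>\<in>{\<sigma>\<in>G. ch \<sigma> = 1}. ch \<sigma> * ln (cmod (\<sigma> \<epsilon>))) + (\<Sum>\<sigma>\<in>{\<sigma>\<in>G. ch \<sigma> = -1}. ch \<sigma> * ln (cmod (\<sigma> \<epsilon>)))"
    unfolding A_def using finite_G by (subst GU, subst sum.union_disjoint) auto
  also have "\<dots> = (\<Sum>\<sigma>\<in>{\<sigma>\<in>G. ch \<sigma> = 1}. ln (cmod (\<sigma> \<epsilon>))) - (\<Sum>\<sigma>\<in>{\<sigma>\<in>G. ch \<sigma> = -1}. ln (cmod (\<sigma> \<epsilon>)))"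
    by (simp add: sum_negf)
  finally show ?thesis using ln_Ap[OF e] by simp
qed

lemma A_quad:
  assumes ch: "ischar ch" and e: "\<epsilon> \<in> units L"
  shows "\<exists>u s p. Ap ch 1 \<epsilon> = of_real u \<and> Ap ch (-1) \<epsilon> = of_real s - of_real u \<and> s \<in> \<int> \<and>
     (p = 1 \<or> p = -1) \<and> u \<noteq> 0 \<and> u^2 - s * u + p = 0 \<and> A ch \<epsilon> = 2 * ln \<bar>u\<bar> \<and>
     Ap ch 1 \<epsilon> * Ap ch (-1) \<epsilon> = of_real p"
proof -
  define P where "P = Ap ch 1 \<epsilon>"
  define M where "M = Ap ch (-1) \<epsilon>"
  have eL: "\<epsilon> \<in> L" using units_props[OF e] by blast
  have "P \<in> \<real>" unfolding P_def using L_real Ap_L eL by blast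
  then obtain u where u: "P = of_real u" by (meson Reals_cases)
  have "P + M \<in> \<int>" unfolding P_def M_def using sP_int[OF ch e] .
  then obtain k where k: "P + M = of_int k" by (meson Ints_cases)
  define s :: real where "s = of_int k"
  have Ms: "M = of_real s - of_real u" using k u unfolding s_def by (simp add: algebra_simps)
  obtain p :: real where p: "p = 1 \<or> p = -1" "P * M = of_real p"
    using NP_pm[OF ch e] unfolding P_def M_def by (metis of_real_1 of_real_minus)
  have u0: "u \<noteq> 0" using Ap_nz[OF e] u unfolding P_def by auto
  have "of_real (u * (s - u)) = (of_real p :: complex)" using p(2) u Ms by simp
  then have up: "u * (s - u) = p" using of_real_eq_iff by blast
  then have eq: "u^2 - s * u + p = 0" by (simp add: algebra_simps power2_eq_square)
  have "cmod M = \<bar>s - u\<bar>" using Ms by (metis norm_of_real of_real_diff)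
  moreover have "\<bar>u\<bar> * \<bar>s - u\<bar> = 1" using up p(1) by (auto simp: abs_mult[symmetric])
  ultimately have "cmod M = 1 / \<bar>u\<bar>" using u0 by (simp add: field_simps)
  then have "ln (cmod M) = - ln \<bar>u\<bar>" using u0 by (simp add: ln_div)
  then have "A ch \<epsilon> = 2 * ln \<bar>u\<bar>" using A_split[OF ch e] u unfolding P_def[symmetric] M_def[symmetric] by simp
  moreover have "s \<in> \<int>" unfolding s_def by simp
  ultimately show ?thesis using u Ms p eq u0 unfolding P_def M_def
    by (intro exI[of _ u] exI[of _ s] exI[of _ p]) auto
qed

end

context mq
begin

lemma A_diff:
  assumes a: "a \<in> units L" and b: "b \<in> units L"
  shows "A ch (a * inverse b) = A ch a - A ch b"
proof -
  have aL: "a \<in> L" "a \<noteq> 0" and bL: "b \<in> L" "b \<noteq> 0" using units_props a b by auto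
  have "ch \<sigma> * ln (cmod (\<sigma> (a * inverse b))) = ch \<sigma> * ln (cmod (\<sigma> a)) - ch \<sigma> * ln (cmod (\<sigma> b))"
    if s: "\<sigma> \<in> G" for \<sigma>
  proof -
    have "\<sigma> (a * inverse b) = \<sigma> a * inverse (\<sigma> b)"
      using emb_mult[OF sf s aL(1) sfinv[OF sf bL(1)]] emb_inverse[OF sf s bL(1)] by simp
    moreover have "\<sigma> a \<noteq> 0" "\<sigma> b \<noteq> 0" using emb_nz[OF sf s] aL bL by auto
    ultimately have "ln (cmod (\<sigma> (a * inverse b))) = ln (cmod (\<sigma> a)) - ln (cmod (\<sigma> b))"
      by (simp add: norm_mult norm_inverse ln_mult ln_inverse)
    then show ?thesis by (simp add: right_diff_distrib)
  qed
  then show ?thesis unfolding A_def by (simp add: sum_subtractf)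
qed

lemma A_1: "A ch 1 = 0"
  unfolding A_def by (rule sum.neutral) (simp add: emb_1[OF sf])

lemma ln_phi_pos: "ln ((1 + sqrt 5) / 2) > (0::real)"
proof -
  have "sqrt (5::real) > 1" by (rule real_less_rsqrt) simp
  then have "(1 + sqrt 5) / 2 > (1::real)" by simp
  then show ?thesis by (rule ln_gt_zero)
qed

lemma A_bound:
  assumes ch: "ischar ch" and e: "\<epsilon> \<in> units L"
  shows "A ch \<epsilon> = 0 \<or> \<bar>A ch \<epsilon>\<bar> \<ge> 2 * ln ((1 + sqrt 5) / 2)"
proof -
  obtain u s p where u: "s \<in> \<int>" "p = 1 \<or> p = -1" "u \<noteq> 0" "u^2 - s * u + p = 0" "A ch \<epsilon> = 2 * ln \<bar>u\<bar>"
    using A_quad[OF ch e] by blast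
  from quad_ln[OF u(3) u(1) u(2) u(4)] show ?thesis using u(5) by auto
qed

lemma lattice:
  assumes ch: "ischar ch"
  shows "\<exists>c\<in>A ch ` units L. c \<ge> 0 \<and> (\<forall>\<epsilon>\<in>units L. \<exists>k::int. A ch \<epsilon> = of_int k * c)"
proof -
  define \<Lambda> where "\<Lambda> = A ch ` units L"
  have "0 \<in> \<Lambda>" unfolding \<Lambda>_def using A_1 units_1 by force
  moreover have "\<forall>x\<in>\<Lambda>. \<forall>y\<in>\<Lambda>. x - y \<in> \<Lambda>"
  proof (intro ballI)
    fix x y assume "x \<in> \<Lambda>" "y \<in> \<Lambda>"
    then obtain a b where ab: "a \<in> units L" "b \<in> units L" "x = A ch a" "y = A ch b" unfolding \<Lambda>_def by blast
    then have "x - y = A ch (a * inverse b)" using A_diff by simp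
    moreover have "a * inverse b \<in> units L" using units_mult[OF ab(1) units_inv[OF ab(2)]] .
    ultimately show "x - y \<in> \<Lambda>" unfolding \<Lambda>_def by blast
  qed
  moreover have "2 * ln ((1 + sqrt 5) / 2) > (0::real)" using ln_phi_pos by simp
  moreover have "\<forall>x\<in>\<Lambda>. x \<noteq> 0 \<longrightarrow> \<bar>x\<bar> \<ge> 2 * ln ((1 + sqrt 5) / 2)"
    unfolding \<Lambda>_def using A_bound[OF ch] by blast
  ultimately have "\<exists>c\<in>\<Lambda>. c \<ge> 0 \<and> (\<forall>x\<in>\<Lambda>. \<exists>k::int. x = of_int k * c)"
    by (rule discrete_cyclic)
  then show ?thesis unfolding \<Lambda>_def by blast
qed

lemma sq5:
  assumes ch: "ischar ch" and e: "\<epsilon> \<in> units L" and pos: "0 < A ch \<epsilon>" and lt: "A ch \<epsilon> < 2 * ln (1 + sqrt 2)"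
  shows "\<exists>r\<in>L. r^2 = 5 \<and> (\<forall>h\<in>G. ch h = 1 \<longleftrightarrow> h r = r)"
proof -
  obtain u s p where u: "Ap ch 1 \<epsilon> = of_real u" "Ap ch (-1) \<epsilon> = of_real s - of_real u" "s \<in> \<int>"
    "p = 1 \<or> p = -1" "u \<noteq> 0" "u^2 - s * u + p = 0" "A ch \<epsilon> = 2 * ln \<bar>u\<bar>"
    using A_quad[OF ch e] by blast
  have eL: "\<epsilon> \<in> L" using units_props[OF e] by blast
  have u1: "\<bar>u\<bar> > 1" using pos u(7) u(5) by (simp add: ln_gt_zero_iff)
  have "ln \<bar>u\<bar> < ln (1 + sqrt 2)" using lt u(7) by simp
  then have u2: "\<bar>u\<bar> < 1 + sqrt 2" using u(5) by (simp add: add_pos_nonneg)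
  have s5: "s^2 - 4 * p = 5" using quad_gt1[OF u1 u(3) u(4) u(6)] u2 by blast
  obtain k where k: "s = of_int k" using u(3) by (meson Ints_cases)
  define P where "P = Ap ch 1 \<epsilon>"
  define r where "r = P + P - of_int k"
  have PL: "P \<in> L" unfolding P_def using Ap_L[OF eL] .
  have rL: "r \<in> L" unfolding r_def using PL sfint[OF sf] sfadd[OF sf] sfdiff[OF sf] by blast
  have "(2 * u - s)^2 = s^2 - 4 * p" using u(6) by (simp add: power2_eq_square algebra_simps)
  then have "(2 * u - s)^2 = 5" using s5 by simp
  then have "(of_real ((2 * u - s)^2) :: complex) = 5" by simp
  moreover have "r = of_real (2 * u - s)" unfolding r_def P_def u(1) k by simp
  ultimately have r5: "r^2 = 5" by simp
  have r0: "r \<noteq> 0" using r5 by auto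
  have "ch h = 1 \<longleftrightarrow> h r = r" if h: "h \<in> G" for h
  proof -
    have hr: "h r = h P + h P - of_int k"
      unfolding r_def using emb_diff[OF sf h sfadd[OF sf PL PL] sfint[OF sf]] emb_add[OF sf h PL PL]
        emb_int[OF sf h] by simp
    have hP: "h P = Ap ch (ch h) \<epsilon>" unfolding P_def using Ap_shift[OF ch h eL, of 1] by simp
    have pm: "ch h = 1 \<or> ch h = -1" using ch h unfolding ischar_def by blast
    show ?thesis
    proof (cases "ch h = 1")
      case True
      then have "h r = r" using hr hP unfolding r_def P_def by simp
      then show ?thesis using True by simp
    next
      case False
      then have "ch h = -1" using pm by simp
      then have "h P = of_real s - P" using hP u(1,2) unfolding P_def by simp
      then have "h r = - r" using hr unfolding r_def k by simp
      then show ?thesis using False r0 by auto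
    qed
  qed
  then show ?thesis using rL r5 by blast
qed

end

context mq
begin

abbreviation pl where "pl \<sigma> \<equiv> place_of L \<sigma>"

lemma AP_eq: "arch_places L = pl ` G"
  unfolding arch_places_def by simp

lemma real_place_pl: "\<sigma> \<in> G \<Longrightarrow> real_place L (pl \<sigma>)"
  unfolding real_place_def using G_real by blast

lemma LOG_pl: "\<sigma> \<in> G \<Longrightarrow> \<gamma> \<in> L \<Longrightarrow> LOG L \<gamma> (pl \<sigma>) = ln (cmod (\<sigma> \<gamma>))"
  unfolding LOG_def e_place_def using real_place_pl AP_eq by (simp add: place_of_def)

lemma pl_inj: "inj_on pl G"
proof (rule inj_onI)
  fix \<sigma> \<tau> assume s: "\<sigma> \<in> G" and t: "\<tau> \<in> G" and eq: "pl \<sigma> = pl \<tau>"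
  show "\<sigma> = \<tau>"
  proof (rule extensionalityI[of _ L])
    show "\<sigma> \<in> extensional L" "\<tau> \<in> extensional L" using G_ext s t by auto
    fix x assume x: "x \<in> L"
    have x1: "x + 1 \<in> L" using sfadd[OF sf x sf1[OF sf]] .
    have c1: "cmod (\<sigma> x) = cmod (\<tau> x)" using fun_cong[OF eq, of x] x by (simp add: place_of_def)
    have c2: "cmod (\<sigma> (x + 1)) = cmod (\<tau> (x + 1))" using fun_cong[OF eq, of "x + 1"] x1 by (simp add: place_of_def)
    obtain a where a: "\<sigma> x = of_real a" using G_real[OF s x] by (meson Reals_cases)
    obtain b where b: "\<tau> x = of_real b" using G_real[OF t x] by (meson Reals_cases)
    have "\<sigma> (x + 1) = of_real (a + 1)" using emb_add[OF sf s x sf1[OF sf]] emb_1[OF sf s] a by simp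
    moreover have "\<tau> (x + 1) = of_real (b + 1)" using emb_add[OF sf t x sf1[OF sf]] emb_1[OF sf t] b by simp
    ultimately have "\<bar>a + 1\<bar> = \<bar>b + 1\<bar>" using c2 by (metis norm_of_real)
    moreover have "\<bar>a\<bar> = \<bar>b\<bar>" using c1 a b by (metis norm_of_real)
    ultimately have "a = b" by (auto simp: abs_if split: if_splits)
    then show "\<sigma> x = \<tau> x" using a b by simp
  qed
qed

lemma W_out: "w \<in> wedge2_LOG_units L \<Longrightarrow> v1 \<notin> arch_places L \<or> v2 \<notin> arch_places L \<Longrightarrow> w (v1, v2) = 0"
  by (induction w rule: wedge2_LOG_units.induct) (auto simp: wedge2_def)

lemma W_antisym: "w \<in> wedge2_LOG_units L \<Longrightarrow> w (v1, v2) = - w (v2, v1)"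
  by (induction w rule: wedge2_LOG_units.induct) (auto simp: wedge2_def)

lemma W_diag: "w \<in> wedge2_LOG_units L \<Longrightarrow> w (v, v) = 0"
  using W_antisym[of w v v] by simp

definition Sc :: "((complex \<Rightarrow> complex) \<Rightarrow> real) \<Rightarrow> ((complex \<Rightarrow> complex) \<Rightarrow> real) \<Rightarrow>
    ((complex \<Rightarrow> real) \<times> (complex \<Rightarrow> real) \<Rightarrow> real) \<Rightarrow> real" where
  "Sc ch ps w = (\<Sum>\<sigma>\<in>G. \<Sum>\<tau>\<in>G. w (pl \<sigma>, pl \<tau>) * ch \<sigma> * ps \<tau>)"

lemma Sc_gen:
  assumes a: "a \<in> units L" and b: "b \<in> units L"
  shows "Sc ch ps (wedge2 L (LOG L a) (LOG L b)) = A ch a * A ps b - A ch b * A ps a"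
proof -
  have aL: "a \<in> L" and bL: "b \<in> L" using units_props a b by auto
  have "Sc ch ps (wedge2 L (LOG L a) (LOG L b)) =
     (\<Sum>\<sigma>\<in>G. \<Sum>\<tau>\<in>G. (ch \<sigma> * ln (cmod (\<sigma> a))) * (ps \<tau> * ln (cmod (\<tau> b)))
                   - (ch \<sigma> * ln (cmod (\<sigma> b))) * (ps \<tau> * ln (cmod (\<tau> a))))"
    unfolding Sc_def
  proof (intro sum.cong refl)
    fix \<sigma> \<tau> assume s: "\<sigma> \<in> G" and t: "\<tau> \<in> G"
    have "pl \<sigma> \<in> arch_places L" "pl \<tau> \<in> arch_places L" using AP_eq s t by auto
    then show "wedge2 L (LOG L a) (LOG L b) (pl \<sigma>, pl \<tau>) * ch \<sigma> * ps \<tau> =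
      (ch \<sigma> * ln (cmod (\<sigma> a))) * (ps \<tau> * ln (cmod (\<tau> b))) - (ch \<sigma> * ln (cmod (\<sigma> b))) * (ps \<tau> * ln (cmod (\<tau> a)))"
      unfolding wedge2_def using LOG_pl s t aL bL by (simp add: algebra_simps)
  qed
  also have "\<dots> = A ch a * A ps b - A ch b * A ps a"
    unfolding A_def by (simp add: sum_subtractf sum_product)
  finally show ?thesis .
qed

lemma Sc_lattice:
  assumes c1: "\<forall>\<epsilon>\<in>units L. \<exists>k::int. A ch \<epsilon> = of_int k * c1"
    and c2: "\<forall>\<epsilon>\<in>units L. \<exists>k::int. A ps \<epsilon> = of_int k * c2"
  shows "w \<in> wedge2_LOG_units L \<Longrightarrow> \<exists>k::int. Sc ch ps w = of_int k * c1 * c2"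
proof (induction w rule: wedge2_LOG_units.induct)
  case zero
  then show ?case by (intro exI[of _ 0]) (simp add: Sc_def)
next
  case (gen a b)
  obtain k1 k2 k3 k4 where k: "A ch a = of_int k1 * c1" "A ps b = of_int k2 * c2"
    "A ch b = of_int k3 * c1" "A ps a = of_int k4 * c2"
    using c1 c2 gen by meson
  have "Sc ch ps (wedge2 L (LOG L a) (LOG L b)) = A ch a * A ps b - A ch b * A ps a"
    by (rule Sc_gen[OF gen])
  also have "\<dots> = of_int (k1 * k2 - k3 * k4) * c1 * c2" using k by (simp add: algebra_simps)
  finally have "Sc ch ps (wedge2 L (LOG L a) (LOG L b)) = of_int (k1 * k2 - k3 * k4) * c1 * c2" .
  then show ?case by blast
next
  case (diff x y)
  obtain k1 k2 where k: "Sc ch ps x = of_int k1 * c1 * c2" "Sc ch ps y = of_int k2 * c1 * c2"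
    using diff.IH by blast
  have "Sc ch ps (\<lambda>p. x p - y p) = Sc ch ps x - Sc ch ps y"
    unfolding Sc_def by (simp add: left_diff_distrib sum_subtractf)
  also have "\<dots> = of_int (k1 - k2) * c1 * c2" using k by (simp add: algebra_simps)
  finally show ?case by blast
qed

lemma Sc_same:
  assumes w: "w \<in> wedge2_LOG_units L" and eq: "\<forall>\<sigma>\<in>G. ch \<sigma> = ps \<sigma>"
  shows "Sc ch ps w = 0"
proof -
  define f where "f = (\<lambda>\<sigma> \<tau>. w (pl \<sigma>, pl \<tau>) * ch \<sigma> * ch \<tau>)"
  have "Sc ch ps w = (\<Sum>\<sigma>\<in>G. \<Sum>\<tau>\<in>G. f \<sigma> \<tau>)" unfolding Sc_def f_def
    by (intro sum.cong refl) (simp add: eq)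
  also have "\<dots> = (\<Sum>\<tau>\<in>G. \<Sum>\<sigma>\<in>G. f \<sigma> \<tau>)" by (rule sum.swap)
  also have "\<dots> = (\<Sum>\<tau>\<in>G. \<Sum>\<sigma>\<in>G. - f \<tau> \<sigma>)"
  proof (intro sum.cong refl)
    fix \<tau> \<sigma>
    have "w (pl \<sigma>, pl \<tau>) = - w (pl \<tau>, pl \<sigma>)" by (rule W_antisym[OF w])
    then show "f \<sigma> \<tau> = - f \<tau> \<sigma>" unfolding f_def by simp
  qed
  also have "\<dots> = - (\<Sum>\<sigma>\<in>G. \<Sum>\<tau>\<in>G. f \<sigma> \<tau>)" by (simp add: sum_negf)
  finally have "(\<Sum>\<sigma>\<in>G. \<Sum>\<tau>\<in>G. f \<sigma> \<tau>) = 0" using \<open>Sc ch ps w = _\<close> by simp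
  then show ?thesis using \<open>Sc ch ps w = _\<close> by simp
qed

end

context mq
begin

lemma chi_orth:
  assumes s: "\<sigma> \<in> G" and s0: "\<sigma>0 \<in> G"
  shows "(\<Sum>S\<in>Pow {..<n}. chi S \<sigma> * chi S \<sigma>0) = (if \<sigma> = \<sigma>0 then 2 ^ n else 0)"
proof -
  define f where "f i = sg (\<phi> \<sigma> i) * sg (\<phi> \<sigma>0 i)" for i
  have "(\<Sum>S\<in>Pow {..<n}. chi S \<sigma> * chi S \<sigma>0) = (\<Sum>S\<in>Pow {..<n}. \<Prod>i\<in>S. f i)"
    unfolding chi_def f_def by (simp add: prod.distrib)
  also have "\<dots> = (\<Prod>i\<in>{..<n}. f i + 1)"
    using prod_add[of "{..<n}" f "\<lambda>_. 1"] by simp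
  finally have eq: "(\<Sum>S\<in>Pow {..<n}. chi S \<sigma> * chi S \<sigma>0) = (\<Prod>i\<in>{..<n}. f i + 1)" .
  show ?thesis
  proof (cases "\<sigma> = \<sigma>0")
    case True
    then have "f i + 1 = 2" for i unfolding f_def by (simp add: sg_def)
    then show ?thesis using eq True by simp
  next
    case False
    have ne: "\<phi> \<sigma> \<noteq> \<phi> \<sigma>0" using False phi_bij s s0 unfolding bij_betw_def by (meson inj_onD)
    have p1: "\<phi> \<sigma> \<in> extensional {..<n}" using phi_bij s unfolding bij_betw_def PiE_def by blast
    have p2: "\<phi> \<sigma>0 \<in> extensional {..<n}" using phi_bij s0 unfolding bij_betw_def PiE_def by blast
    have "\<exists>i<n. \<phi> \<sigma> i \<noteq> \<phi> \<sigma>0 i"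
    proof (rule ccontr)
      assume c: "\<not> (\<exists>i<n. \<phi> \<sigma> i \<noteq> \<phi> \<sigma>0 i)"
      have "\<phi> \<sigma> = \<phi> \<sigma>0"
      proof (rule extensionalityI[OF p1 p2])
        fix i assume "i \<in> {..<n}" then show "\<phi> \<sigma> i = \<phi> \<sigma>0 i" using c by blast
      qed
      then show False using ne by contradiction
    qed
    then obtain i where i: "i < n" "\<phi> \<sigma> i \<noteq> \<phi> \<sigma>0 i" by blast
    then have "f i + 1 = 0" unfolding f_def using phi_val[OF s i(1)] phi_val[OF s0 i(1)]
      by (auto simp: sg_def)
    then have "(\<Prod>i\<in>{..<n}. f i + 1) = 0" using i(1) by (intro prod_zero) auto
    then show ?thesis using eq False by simp
  qed
qed

lemma fourier:
  assumes s0: "\<sigma>0 \<in> G" and t0: "\<tau>0 \<in> G"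
  shows "(\<Sum>S1\<in>Pow {..<n}. \<Sum>S2\<in>Pow {..<n}. Sc (chi S1) (chi S2) w * chi S1 \<sigma>0 * chi S2 \<tau>0)
         = 2 ^ n * 2 ^ n * w (pl \<sigma>0, pl \<tau>0)"
proof -
  define P where "P = Pow {..<n}"
  define F where "F = (\<lambda>S1 S2 \<sigma> \<tau>. w (pl \<sigma>, pl \<tau>) * (chi S1 \<sigma> * chi S1 \<sigma>0) * (chi S2 \<tau> * chi S2 \<tau>0))"
  have "(\<Sum>S1\<in>P. \<Sum>S2\<in>P. Sc (chi S1) (chi S2) w * chi S1 \<sigma>0 * chi S2 \<tau>0)
      = (\<Sum>S1\<in>P. \<Sum>S2\<in>P. \<Sum>\<sigma>\<in>G. \<Sum>\<tau>\<in>G. F S1 S2 \<sigma> \<tau>)"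
    unfolding Sc_def F_def
    by (intro sum.cong refl) (simp add: sum_distrib_left sum_distrib_right mult_ac)
  also have "\<dots> = (\<Sum>S1\<in>P. \<Sum>\<sigma>\<in>G. \<Sum>S2\<in>P. \<Sum>\<tau>\<in>G. F S1 S2 \<sigma> \<tau>)"
    by (rule sum.cong[OF refl], rule sum.swap)
  also have "\<dots> = (\<Sum>\<sigma>\<in>G. \<Sum>S1\<in>P. \<Sum>S2\<in>P. \<Sum>\<tau>\<in>G. F S1 S2 \<sigma> \<tau>)"
    by (rule sum.swap)
  also have "\<dots> = (\<Sum>\<sigma>\<in>G. \<Sum>S1\<in>P. \<Sum>\<tau>\<in>G. \<Sum>S2\<in>P. F S1 S2 \<sigma> \<tau>)"
    by (rule sum.cong[OF refl], rule sum.cong[OF refl], rule sum.swap)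
  also have "\<dots> = (\<Sum>\<sigma>\<in>G. \<Sum>\<tau>\<in>G. \<Sum>S1\<in>P. \<Sum>S2\<in>P. F S1 S2 \<sigma> \<tau>)"
    by (rule sum.cong[OF refl], rule sum.swap)
  also have "\<dots> = (\<Sum>\<sigma>\<in>G. \<Sum>\<tau>\<in>G. w (pl \<sigma>, pl \<tau>) * (\<Sum>S1\<in>P. chi S1 \<sigma> * chi S1 \<sigma>0) * (\<Sum>S2\<in>P. chi S2 \<tau> * chi S2 \<tau>0))"
    unfolding F_def by (simp add: sum_distrib_left sum_distrib_right mult_ac)
  also have "\<dots> = (\<Sum>\<sigma>\<in>G. \<Sum>\<tau>\<in>G. w (pl \<sigma>, pl \<tau>) * (if \<sigma> = \<sigma>0 then 2 ^ n else 0) * (if \<tau> = \<tau>0 then 2 ^ n else 0))"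
    unfolding P_def by (intro sum.cong refl) (simp add: chi_orth s0 t0)
  also have "\<dots> = (\<Sum>\<sigma>\<in>G. w (pl \<sigma>, pl \<tau>0) * (if \<sigma> = \<sigma>0 then 2 ^ n else 0) * 2 ^ n)"
  proof (rule sum.cong[OF refl])
    fix \<sigma>
    have "(\<Sum>\<tau>\<in>G. w (pl \<sigma>, pl \<tau>) * (if \<sigma> = \<sigma>0 then 2 ^ n else 0) * (if \<tau> = \<tau>0 then 2 ^ n else 0))
        = (\<Sum>\<tau>\<in>G. if \<tau> = \<tau>0 then w (pl \<sigma>, pl \<tau>0) * (if \<sigma> = \<sigma>0 then 2 ^ n else 0) * 2 ^ n else 0)"
      by (rule sum.cong) auto
    also have "\<dots> = w (pl \<sigma>, pl \<tau>0) * (if \<sigma> = \<sigma>0 then 2 ^ n else 0) * 2 ^ n"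
      using t0 finite_G by (simp add: sum.delta)
    finally show "(\<Sum>\<tau>\<in>G. w (pl \<sigma>, pl \<tau>) * (if \<sigma> = \<sigma>0 then 2 ^ n else 0) * (if \<tau> = \<tau>0 then 2 ^ n else 0))
        = w (pl \<sigma>, pl \<tau>0) * (if \<sigma> = \<sigma>0 then 2 ^ n else 0) * 2 ^ n" .
  qed
  also have "\<dots> = (\<Sum>\<sigma>\<in>G. if \<sigma> = \<sigma>0 then w (pl \<sigma>0, pl \<tau>0) * 2 ^ n * 2 ^ n else 0)"
    by (rule sum.cong) auto
  also have "\<dots> = 2 ^ n * 2 ^ n * w (pl \<sigma>0, pl \<tau>0)"
    using s0 finite_G by (simp add: sum.delta mult_ac)
  finally show ?thesis unfolding P_def .
qed

lemma norm_ge: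
  assumes w: "w \<in> wedge2_LOG_units L"
    and ch: "\<forall>\<sigma>\<in>G. \<bar>ch \<sigma>\<bar> = 1" and ps: "\<forall>\<sigma>\<in>G. \<bar>ps \<sigma>\<bar> = 1"
  shows "\<bar>Sc ch ps w\<bar> \<le> 2 * norm1_wedge2 L w"
proof -
  define Pairs where "Pairs = {(v1, v2). v1 \<in> arch_places L \<and> v2 \<in> arch_places L \<and> v1 \<noteq> v2}"
  have fAP: "finite (arch_places L)" unfolding AP_eq using finite_G by simp
  have "(\<Sum>p\<in>Pairs. \<bar>w p\<bar>) = (\<Sum>p\<in>arch_places L \<times> arch_places L. \<bar>w p\<bar>)"
  proof (rule sum.mono_neutral_left)
    show "finite (arch_places L \<times> arch_places L)" using fAP by simp
    show "Pairs \<subseteq> arch_places L \<times> arch_places L" unfolding Pairs_def by auto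
    show "\<forall>p\<in>arch_places L \<times> arch_places L - Pairs. \<bar>w p\<bar> = 0"
      unfolding Pairs_def using W_diag[OF w] by auto
  qed
  also have "arch_places L \<times> arch_places L = (\<lambda>(\<sigma>,\<tau>). (pl \<sigma>, pl \<tau>)) ` (G \<times> G)"
    unfolding AP_eq by auto
  also have "(\<Sum>p\<in>(\<lambda>(\<sigma>,\<tau>). (pl \<sigma>, pl \<tau>)) ` (G \<times> G). \<bar>w p\<bar>) = (\<Sum>(\<sigma>,\<tau>)\<in>G \<times> G. \<bar>w (pl \<sigma>, pl \<tau>)\<bar>)"
  proof (subst sum.reindex)
    show "inj_on (\<lambda>(\<sigma>,\<tau>). (pl \<sigma>, pl \<tau>)) (G \<times> G)"
      using pl_inj by (auto simp: inj_on_def)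
  qed (simp add: case_prod_unfold)
  also have "\<dots> = (\<Sum>\<sigma>\<in>G. \<Sum>\<tau>\<in>G. \<bar>w (pl \<sigma>, pl \<tau>)\<bar>)" by (simp add: sum.cartesian_product)
  finally have S: "(\<Sum>p\<in>Pairs. \<bar>w p\<bar>) = (\<Sum>\<sigma>\<in>G. \<Sum>\<tau>\<in>G. \<bar>w (pl \<sigma>, pl \<tau>)\<bar>)" .
  have "\<bar>Sc ch ps w\<bar> \<le> (\<Sum>\<sigma>\<in>G. \<bar>\<Sum>\<tau>\<in>G. w (pl \<sigma>, pl \<tau>) * ch \<sigma> * ps \<tau>\<bar>)"
    unfolding Sc_def by (rule sum_abs)
  also have "\<dots> \<le> (\<Sum>\<sigma>\<in>G. \<Sum>\<tau>\<in>G. \<bar>w (pl \<sigma>, pl \<tau>) * ch \<sigma> * ps \<tau>\<bar>)"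
    by (intro sum_mono sum_abs)
  also have "\<dots> = (\<Sum>\<sigma>\<in>G. \<Sum>\<tau>\<in>G. \<bar>w (pl \<sigma>, pl \<tau>)\<bar>)"
    using ch ps by (intro sum.cong refl) (simp add: abs_mult)
  finally show ?thesis using S unfolding norm1_wedge2_def Pairs_def by simp
qed

lemma chi_abs: assumes "S \<subseteq> {..<n}" shows "\<forall>\<sigma>\<in>G. \<bar>chi S \<sigma>\<bar> = 1"
proof
  fix \<sigma> assume s: "\<sigma> \<in> G"
  have "\<forall>\<sigma>\<in>G. chi S \<sigma> = 1 \<or> chi S \<sigma> = -1" using chi_ischar[OF assms] unfolding ischar_def by (rule conjunct1)
  then have "chi S \<sigma> = 1 \<or> chi S \<sigma> = -1" using s by blast
  then show "\<bar>chi S \<sigma>\<bar> = 1" by auto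
qed

theorem main:
  assumes w: "w \<in> wedge2_LOG_units L" and nz: "w \<noteq> (\<lambda>_. 0)"
  shows "norm1_wedge2 L w \<ge> 2 * ln ((1 + sqrt 5) / 2) * ln (1 + sqrt 2)"
proof -
  define a where "a = 2 * ln ((1 + sqrt 5) / 2)"
  define b where "b = 2 * ln (1 + sqrt 2)"
  have a0: "a > 0" unfolding a_def using ln_phi_pos by simp
  have b0: "b > 0" unfolding b_def by (simp add: ln_gt_zero add_pos_nonneg)
  obtain v where v: "w v \<noteq> 0" using nz by blast
  obtain v1 v2 where vv: "v = (v1, v2)" by fastforce
  have "v1 \<in> arch_places L" "v2 \<in> arch_places L" using W_out[OF w] v vv by blast+
  then obtain \<sigma>0 \<tau>0 where st: "\<sigma>0 \<in> G" "\<tau>0 \<in> G" "v1 = pl \<sigma>0" "v2 = pl \<tau>0" unfolding AP_eq by blast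
  have "(\<Sum>S1\<in>Pow {..<n}. \<Sum>S2\<in>Pow {..<n}. Sc (chi S1) (chi S2) w * chi S1 \<sigma>0 * chi S2 \<tau>0) \<noteq> 0"
    using fourier[OF st(1,2), of w] v vv st by simp
  then obtain S1 where S1: "S1 \<in> Pow {..<n}"
    "(\<Sum>S2\<in>Pow {..<n}. Sc (chi S1) (chi S2) w * chi S1 \<sigma>0 * chi S2 \<tau>0) \<noteq> 0"
    using sum.not_neutral_contains_not_neutral by blast
  then obtain S2 where S2: "S2 \<in> Pow {..<n}" "Sc (chi S1) (chi S2) w * chi S1 \<sigma>0 * chi S2 \<tau>0 \<noteq> 0"
    using sum.not_neutral_contains_not_neutral by blast
  have S: "S1 \<subseteq> {..<n}" "S2 \<subseteq> {..<n}" "Sc (chi S1) (chi S2) w \<noteq> 0"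
    using S1(1) S2 by auto
  define ch where "ch = chi S1"
  define ps where "ps = chi S2"
  have ch: "ischar ch" and ps: "ischar ps" unfolding ch_def ps_def using chi_ischar S by auto
  obtain c1 where c1: "c1 \<in> A ch ` units L" "c1 \<ge> 0" "\<forall>\<epsilon>\<in>units L. \<exists>k::int. A ch \<epsilon> = of_int k * c1"
    using lattice[OF ch] by blast
  obtain c2 where c2: "c2 \<in> A ps ` units L" "c2 \<ge> 0" "\<forall>\<epsilon>\<in>units L. \<exists>k::int. A ps \<epsilon> = of_int k * c2"
    using lattice[OF ps] by blast
  obtain k where k: "Sc ch ps w = of_int k * c1 * c2" using Sc_lattice[OF c1(3) c2(3) w] by blast
  have Sn: "Sc ch ps w \<noteq> 0" using S(3) unfolding ch_def ps_def .
  then have k0: "k \<noteq> 0" and c10: "c1 \<noteq> 0" and c20: "c2 \<noteq> 0" using k by auto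
  obtain e1 where e1: "e1 \<in> units L" "c1 = A ch e1" using c1(1) by blast
  obtain e2 where e2: "e2 \<in> units L" "c2 = A ps e2" using c2(1) by blast
  have c1a: "c1 \<ge> a" using A_bound[OF ch e1(1)] e1(2) c10 c1(2) unfolding a_def by auto
  have c2a: "c2 \<ge> a" using A_bound[OF ps e2(1)] e2(2) c20 c2(2) unfolding a_def by auto
  have "\<bar>Sc ch ps w\<bar> = \<bar>of_int k\<bar> * c1 * c2" using k c1(2) c2(2) by (simp add: abs_mult)
  moreover have "\<bar>of_int k :: real\<bar> \<ge> 1" using k0 by linarith
  moreover have "0 \<le> c1 * c2" using c1(2) c2(2) by simp
  ultimately have "1 * (c1 * c2) \<le> \<bar>of_int k :: real\<bar> * (c1 * c2)" by (intro mult_right_mono)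
  then have Sge: "\<bar>Sc ch ps w\<bar> \<ge> c1 * c2" using \<open>\<bar>Sc ch ps w\<bar> = _\<close> by (simp add: mult.assoc)
  have "c1 * c2 \<ge> a * b"
  proof (cases "c1 \<ge> b \<or> c2 \<ge> b")
    case True
    then show ?thesis
    proof
      assume "c1 \<ge> b"
      then have "b * a \<le> c1 * c2" using c2a a0 b0 by (intro mult_mono) auto
      then show ?thesis by (simp add: mult.commute)
    next
      assume "c2 \<ge> b"
      then show ?thesis using c1a a0 b0 by (intro mult_mono) auto
    qed
  next
    case False
    then have "c1 < b" "c2 < b" by auto
    have c1p: "c1 > 0" "c2 > 0" using c1(2) c2(2) c10 c20 by auto
    obtain r1 where r1: "r1 \<in> L" "r1^2 = 5" "\<forall>h\<in>G. ch h = 1 \<longleftrightarrow> h r1 = r1"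
      using sq5[OF ch e1(1)] e1(2) c1p \<open>c1 < b\<close> unfolding b_def by auto
    obtain r2 where r2: "r2 \<in> L" "r2^2 = 5" "\<forall>h\<in>G. ps h = 1 \<longleftrightarrow> h r2 = r2"
      using sq5[OF ps e2(1)] e2(2) c1p \<open>c2 < b\<close> unfolding b_def by auto
    have "r2^2 = r1^2" using r1(2) r2(2) by simp
    then have "r2 = r1 \<or> r2 = - r1" by (simp add: power2_eq_iff)
    have "ch h = ps h" if h: "h \<in> G" for h
    proof -
      have "h r2 = r2 \<longleftrightarrow> h r1 = r1"
        using \<open>r2 = r1 \<or> r2 = - r1\<close> emb_uminus[OF sf h r1(1)] by auto
      then have "ch h = 1 \<longleftrightarrow> ps h = 1" using r1(3) r2(3) h by blast
      moreover have "ch h = 1 \<or> ch h = -1" "ps h = 1 \<or> ps h = -1"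
        using ch ps h unfolding ischar_def by auto
      ultimately show ?thesis by auto
    qed
    then have "Sc ch ps w = 0" using Sc_same[OF w] by blast
    then show ?thesis using Sn by simp
  qed
  then have "\<bar>Sc ch ps w\<bar> \<ge> a * b" using Sge by simp
  moreover have "\<bar>Sc ch ps w\<bar> \<le> 2 * norm1_wedge2 L w"
    using norm_ge[OF w] chi_abs S unfolding ch_def ps_def by blast
  ultimately show ?thesis unfolding a_def b_def by simp
qed

end

theorem theorem1:
  fixes n :: nat and L :: "complex set"
    and w :: "(complex \<Rightarrow> real) \<times> (complex \<Rightarrow> real) \<Rightarrow> real"
  assumes "n \<ge> 2"
    and "number_field L" and "totally_real L" and "galois_over_Q L"
    and "Gal L \<cong> Z2_power n"
    and "w \<in> wedge2_LOG_units L" and "w \<noteq> (\<lambda>_. 0)"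
  shows "norm1_wedge2 L w \<ge> 2 * ln ((1 + sqrt 5) / 2) * ln (1 + sqrt 2)"
proof -
  obtain \<phi> where "\<phi> \<in> iso (Gal L) (Z2_power n)" using assms(5) unfolding is_iso_def by blast
  then interpret mq L n \<phi> using assms(2-4) by unfold_locales
  show ?thesis using main assms(6,7) by blast
qed


end
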